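(* Let $U$, $x_i$, $x_{i+1/2}$, $h$, $\tilde h_R$, $\tilde h_L$ be as in the context, let $W_i:=\min_{j=1,\dots,k}(\tilde h_R(x_i;x_{j+1})+\tilde h_L(x_i;x_j))$ for $i=1,\dots,k$, and $W(x)=\min_{j=1,\dots,k}\{W_j+h(x;x_j)\}$, $x\in\mathbb{S}^1$. Then: (i) $W$ is Lipschitz continuous and periodic. (ii) In each interval on which $U$ is increasing (resp. decreasing) there is at most one point of non-differentiability of $W$, at which $W$ is an increasing function connected to a constant (resp. a constant connected to a decreasing function). In particular $W$ is differentiable at all critical points $x_i,x_{i+1/2}$, $i=1,\dots,k$. (iii) $W$ is a viscosity solution of $H(W'(x),x)=W'(x)(W'(x)-U'(x))=0$, $x\in\mathbb{S}^1$, and satisfies $W(x_j)=W_j$ for $j=1,\dots,k$.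
   Context: $\mathbb{S}^1=\mathbb{R}/\mathbb{Z}$; $U:\mathbb{R}\to\mathbb{R}$ smooth, skew periodic ($U(x)=\tilde U(x)-\bar bx$, $\tilde U$ smooth 1-periodic), whose critical points in one period are exactly $k\ge1$ local minima $x_1,\dots,x_k$ interleaved with $k$ local maxima, $0=x_{1/2}<x_1<x_{3/2}<\dots<x_k<x_{k+1/2}=1$, $x_{i+\ell k}=x_i+\ell$. $L(s,x)=\frac14(s+U'(x))^2$. Peierls barrier: $h(y;x)=\liminf_{T\to\infty}\inf\{\int_0^TL(\dot\gamma,\gamma)dt:\gamma:[0,T]\to\mathbb{S}^1$ absolutely continuous, $\gamma(0)=x,\gamma(T)=y\}$. Right barrier: for $y\in[x_i,x_{i+k}]$, $h_R(y;x_i)=\inf\{\int_0^TL(\dot\gamma,\gamma)dt:T\ge0,\gamma:[0,T]\to\mathbb{R}$ absolutely continuous, $\gamma(0)=x_i,\gamma(T)=y\}$; left barrier $h_L(y;x_i)$, $y\in[x_{i-k},x_i]$, same formula. For $i,j\in\{1,\dots,k\}$ ($x_{k+1}=x_1+1$): $\tilde h_R(x_i;x_{j+1})=h_R(x_i;x_{j+1})$ if $j<i$, $=h_R(x_{i+k};x_{j+1})$ if $j\ge i$; $\tilde h_L(x_i;x_j)=h_L(x_i;x_j)$ if $j\ge i$, $=h_L(x_{i-k};x_j)$ if $j<i$. *)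

theory Defs
  imports "HOL-Analysis.Analysis"
begin

definition smooth_fun :: "(real \<Rightarrow> real) \<Rightarrow> bool" where
  "smooth_fun f \<longleftrightarrow> (\<forall>n x. ((deriv ^^ n) f) differentiable (at x))"

definition loc_min :: "(real \<Rightarrow> real) \<Rightarrow> real \<Rightarrow> bool" where
  "loc_min f x \<longleftrightarrow> (\<exists>e>0. \<forall>y. \<bar>y - x\<bar> < e \<longrightarrow> f x \<le> f y)"

definition loc_max :: "(real \<Rightarrow> real) \<Rightarrow> real \<Rightarrow> bool" where
  "loc_max f x \<longleftrightarrow> (\<exists>e>0. \<forall>y. \<bar>y - x\<bar> < e \<longrightarrow> f y \<le> f x)"

definition Lag :: "(real \<Rightarrow> real) \<Rightarrow> real \<Rightarrow> real \<Rightarrow> real" where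
  "Lag U s x = (s + deriv U x)^2 / 4"

definition ac_path :: "real \<Rightarrow> (real \<Rightarrow> real) \<Rightarrow> (real \<Rightarrow> real) \<Rightarrow> bool" where
  "ac_path T \<gamma> g \<longleftrightarrow> set_integrable lborel {0..T} g \<and>
     (\<forall>t\<in>{0..T}. \<gamma> t = \<gamma> 0 + (LINT s:{0..t}|lborel. g s))"

text \<open>Action of a path (possibly infinite, hence ennreal).\<close>
definition action :: "(real \<Rightarrow> real) \<Rightarrow> real \<Rightarrow> (real \<Rightarrow> real) \<Rightarrow> (real \<Rightarrow> real) \<Rightarrow> ennreal" where
  "action U T \<gamma> g = set_nn_integral lborel {0..T} (\<lambda>t. ennreal (Lag U (g t) (\<gamma> t)))"

text \<open>Peierls barrier h(y;x) on the circle R/Z (paths lifted to R, endpoint y modulo Z).\<close>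
definition peierls :: "(real \<Rightarrow> real) \<Rightarrow> real \<Rightarrow> real \<Rightarrow> real" where
  "peierls U y x = enn2real (Liminf at_top (\<lambda>T::real.
      INF p \<in> {(\<gamma>, g). ac_path T \<gamma> g \<and> \<gamma> 0 = x \<and> (\<exists>m::int. \<gamma> T = y + of_int m)}.
        action U T (fst p) (snd p)))"

text \<open>Barrier on R (the common formula of h_R and h_L): infimum of the action over all
  T \<ge> 0 and absolutely continuous paths in R from x to y.\<close>
definition barrier :: "(real \<Rightarrow> real) \<Rightarrow> real \<Rightarrow> real \<Rightarrow> real" where
  "barrier U y x = enn2real (INF p \<in> {(T, \<gamma>, g). T \<ge> 0 \<and> ac_path T \<gamma> g \<and> \<gamma> 0 = x \<and> \<gamma> T = y}.
        action U (fst p) (fst (snd p)) (snd (snd p)))"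

definition hR_tilde :: "(real \<Rightarrow> real) \<Rightarrow> (int \<Rightarrow> real) \<Rightarrow> int \<Rightarrow> int \<Rightarrow> int \<Rightarrow> real" where
  "hR_tilde U xm k i j = (if j < i then barrier U (xm i) (xm (j+1)) else barrier U (xm (i+k)) (xm (j+1)))"

definition hL_tilde :: "(real \<Rightarrow> real) \<Rightarrow> (int \<Rightarrow> real) \<Rightarrow> int \<Rightarrow> int \<Rightarrow> int \<Rightarrow> real" where
  "hL_tilde U xm k i j = (if j \<ge> i then barrier U (xm i) (xm j) else barrier U (xm (i-k)) (xm j))"

definition Wcoef :: "(real \<Rightarrow> real) \<Rightarrow> (int \<Rightarrow> real) \<Rightarrow> int \<Rightarrow> int \<Rightarrow> real" where
  "Wcoef U xm k i = Min ((\<lambda>j. hR_tilde U xm k i j + hL_tilde U xm k i j) ` {1..k})"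

definition Wfun :: "(real \<Rightarrow> real) \<Rightarrow> (int \<Rightarrow> real) \<Rightarrow> int \<Rightarrow> real \<Rightarrow> real" where
  "Wfun U xm k x = Min ((\<lambda>j. Wcoef U xm k j + peierls U x (xm j)) ` {1..k})"

definition C1_fun :: "(real \<Rightarrow> real) \<Rightarrow> bool" where
  "C1_fun \<phi> \<longleftrightarrow> (\<forall>x. \<phi> differentiable (at x)) \<and> continuous_on UNIV (deriv \<phi>)"

definition viscosity_solution :: "(real \<Rightarrow> real \<Rightarrow> real) \<Rightarrow> (real \<Rightarrow> real) \<Rightarrow> bool" where
  "viscosity_solution H u \<longleftrightarrow> continuous_on UNIV u \<and>
     (\<forall>\<phi> x. C1_fun \<phi> \<and> loc_max (\<lambda>y. u y - \<phi> y) x \<longrightarrow> H (deriv \<phi> x) x \<le> 0) \<and>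
     (\<forall>\<phi> x. C1_fun \<phi> \<and> loc_min (\<lambda>y. u y - \<phi> y) x \<longrightarrow> H (deriv \<phi> x) x \<ge> 0)"

end

theory Submission
  imports Defs
begin

lemma antideriv_exists:
  fixes h :: "real \<Rightarrow> real"
  assumes "continuous_on UNIV h"
  shows "\<exists>H. \<forall>z. (H has_real_derivative h z) (at z)"
proof -
  have "((\<lambda>u. LBINT y=0..u. h y) has_real_derivative h z) (at z)" for z
  proof -
    have "((\<lambda>u. LBINT y=0..u. h y) has_vector_derivative h z) (at z within {-\<bar>z\<bar>-1..\<bar>z\<bar>+1})"
      using interval_integral_FTC2[of "-\<bar>z\<bar>-1" 0 "\<bar>z\<bar>+1" h z] continuous_on_subset[OF assms]
      by (auto simp: zero_ereal_def)
    moreover have "at z within {-\<bar>z\<bar>-1..\<bar>z\<bar>+1} = at z"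
      by (rule at_within_Icc_at) auto
    ultimately show ?thesis by (simp add: has_real_derivative_iff_has_vector_derivative)
  qed
  then show ?thesis by blast
qed


lemma mvt_any:
  fixes F F' :: "real \<Rightarrow> real"
  assumes F: "\<And>z. (F has_real_derivative F' z) (at z)"
  shows "\<exists>\<xi>. min a b \<le> \<xi> \<and> \<xi> \<le> max a b \<and> F b - F a = (b - a) * F' \<xi>"
proof (cases a b rule: linorder_cases)
  case less
  then obtain z where "a < z" "z < b" "F b - F a = (b - a) * F' z"
    using MVT2[of a b F F'] F by blast
  then show ?thesis by (intro exI[of _ z]) auto
next
  case equal then show ?thesis by auto
next
  case greater
  then obtain z where "b < z" "z < a" "F a - F b = (a - b) * F' z"
    using MVT2[of b a F F'] F by blast
  then show ?thesis by (intro exI[of _ z]) (auto simp: algebra_simps)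
qed

lemma local_to_global:
  fixes \<Phi> \<Psi> :: "real \<Rightarrow> real"
  assumes "a \<le> b" "\<delta> > 0"
    and loc: "\<And>s t. a \<le> s \<Longrightarrow> s \<le> t \<Longrightarrow> t \<le> b \<Longrightarrow> t - s < \<delta> \<Longrightarrow> \<bar>\<Phi> t - \<Phi> s\<bar> \<le> \<Psi> t - \<Psi> s"
  shows "\<bar>\<Phi> b - \<Phi> a\<bar> \<le> \<Psi> b - \<Psi> a"
proof -
  have *: "\<forall>s t. a \<le> s \<longrightarrow> s \<le> t \<longrightarrow> t \<le> b \<longrightarrow> t - s < real (Suc n) * \<delta> \<longrightarrow> \<bar>\<Phi> t - \<Phi> s\<bar> \<le> \<Psi> t - \<Psi> s" for n
  proof (induction n)
    case 0 then show ?case using loc by simp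
  next
    case (Suc n)
    show ?case
    proof (intro allI impI)
      fix s t assume st: "a \<le> s" "s \<le> t" "t \<le> b" "t - s < real (Suc (Suc n)) * \<delta>"
      define m where "m = t - (t - s) / real (Suc (Suc n))"
      have d0: "(t - s) / real (Suc (Suc n)) \<ge> 0" using st by auto
      have d1: "(t - s) / real (Suc (Suc n)) < \<delta>" using st by (simp add: divide_less_eq mult.commute)
      have "m - s = (t - s) * real (Suc n) / real (Suc (Suc n))"
        unfolding m_def by (simp add: field_simps)
      also have "\<dots> < real (Suc n) * \<delta>"
      proof -
        have "(t - s) * real (Suc n) / real (Suc (Suc n)) = real (Suc n) * ((t - s) / real (Suc (Suc n)))"
          by simp
        also have "\<dots> < real (Suc n) * \<delta>"
          using d1 by (intro mult_strict_left_mono) auto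
        finally show ?thesis .
      qed
      finally have m1: "m - s < real (Suc n) * \<delta>" .
      have "(t - s) * 1 \<le> (t - s) * real (Suc (Suc n))"
        using st by (intro mult_left_mono) auto
      then have q: "(t - s) / real (Suc (Suc n)) \<le> t - s"
        by (simp add: divide_le_eq)
      have ms: "s \<le> m" "m \<le> t" unfolding m_def using q d0 by auto
      have "\<bar>\<Phi> m - \<Phi> s\<bar> \<le> \<Psi> m - \<Psi> s" using Suc.IH st ms m1 by auto
      moreover have "\<bar>\<Phi> t - \<Phi> m\<bar> \<le> \<Psi> t - \<Psi> m" using loc[of m t] st ms d1 unfolding m_def by auto
      ultimately show "\<bar>\<Phi> t - \<Phi> s\<bar> \<le> \<Psi> t - \<Psi> s" by linarith
    qed
  qed
  obtain n where "b - a < real n * \<delta>"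
    using reals_Archimedean3[OF \<open>\<delta> > 0\<close>] by blast
  then have "b - a < real (Suc n) * \<delta>" using \<open>\<delta> > 0\<close>
    by (simp add: distrib_right)
  then show ?thesis using *[of n] assms(1) by blast
qed


lemma ac_hk:
  fixes g :: "real \<Rightarrow> real"
  assumes gi: "set_integrable lborel {0..T} g" and t: "t \<in> {0..T}"
  shows "g integrable_on {0..t}" "(LINT s:{0..t}|lborel. g s) = integral {0..t} g"
proof -
  have "set_integrable lborel {0..t} g"
    by (rule set_integrable_subset[OF gi]) (use t in auto)
  then show "g integrable_on {0..t}" "(LINT s:{0..t}|lborel. g s) = integral {0..t} g"
    using set_borel_integral_eq_integral by auto
qed

lemma chain_rule_ac:
  fixes \<gamma> g F F' :: "real \<Rightarrow> real" and T :: real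
  assumes T: "0 \<le> T" and gi: "set_integrable lborel {0..T} g"
    and gam: "\<forall>t\<in>{0..T}. \<gamma> t = \<gamma> 0 + (LINT s:{0..t}|lborel. g s)"
    and F: "\<And>z. (F has_real_derivative F' z) (at z)" and cF: "continuous_on UNIV F'"
  shows "set_integrable lborel {0..T} (\<lambda>t. g t * F' (\<gamma> t))"
    and "F (\<gamma> T) - F (\<gamma> 0) = (LINT t:{0..T}|lborel. g t * F' (\<gamma> t))"
proof -
  have gT: "g integrable_on {0..T}" using ac_hk[OF gi, of T] T by auto
  have gam2: "\<gamma> t - \<gamma> 0 = integral {0..t} g" if "t \<in> {0..T}" for t
  proof -
    have "\<gamma> t = \<gamma> 0 + (LINT s:{0..t}|lborel. g s)" using gam that by blast
    then show ?thesis using ac_hk(2)[OF gi that] by simp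
  qed
  have cgam: "continuous_on {0..T} \<gamma>"
  proof -
    have "continuous_on {0..T} (\<lambda>t. \<gamma> 0 + integral {0..t} g)"
      by (intro continuous_intros indefinite_integral_continuous_1 gT)
    then show ?thesis by (rule continuous_on_eq) (use gam2 in force)
  qed
  have ch: "continuous_on {0..T} (\<lambda>t. F' (\<gamma> t))"
    by (rule continuous_on_compose2[OF cF cgam]) auto
  obtain B where B0: "\<forall>x\<in>(\<lambda>t. F' (\<gamma> t)) ` {0..T}. norm x \<le> B"
    using compact_imp_bounded[OF compact_continuous_image[OF ch compact_Icc]]
    unfolding bounded_iff by blast
  have B: "\<And>t. t \<in> {0..T} \<Longrightarrow> \<bar>F' (\<gamma> t)\<bar> \<le> B" using B0 by auto
  have meas_h: "(\<lambda>x. indicator {0..T} x *\<^sub>R F' (\<gamma> x)) \<in> borel_measurable lborel"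
    using borel_measurable_continuous_on_indicator[OF _ ch] by simp
  have meas_g: "(\<lambda>x. indicator {0..T} x *\<^sub>R g x) \<in> borel_measurable lborel"
    using gi unfolding set_integrable_def by auto
  have "(\<lambda>x. indicator {0..T} x *\<^sub>R (g x * F' (\<gamma> x))) =
        (\<lambda>x. (indicator {0..T} x *\<^sub>R g x) * (indicator {0..T} x *\<^sub>R F' (\<gamma> x)))"
    by (rule ext) (simp split: split_indicator)
  then have meas: "set_borel_measurable lborel {0..T} (\<lambda>t. g t * F' (\<gamma> t))"
    unfolding set_borel_measurable_def using meas_g meas_h by simp
  show ki: "set_integrable lborel {0..T} (\<lambda>t. g t * F' (\<gamma> t))"
  proof (rule set_integrable_bound[OF _ meas])
    show "set_integrable lborel {0..T} (\<lambda>t. B * g t)" using gi by simp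
    show "AE x in lborel. x \<in> {0..T} \<longrightarrow> norm (g x * F' (\<gamma> x)) \<le> norm (B * g x)"
    proof (intro AE_I2 impI)
      fix x assume x: "x \<in> {0..T}"
      have "\<bar>g x\<bar> * \<bar>F' (\<gamma> x)\<bar> \<le> \<bar>g x\<bar> * B" using B[OF x] by (intro mult_left_mono) auto
      moreover have "0 \<le> B" using B[OF x] by linarith
      ultimately show "norm (g x * F' (\<gamma> x)) \<le> norm (B * g x)" by (simp add: abs_mult mult.commute)
    qed
  qed
  define k where "k = (\<lambda>t. g t * F' (\<gamma> t))"
  have kT: "k integrable_on {0..T}" using ac_hk[OF ki, of T] T unfolding k_def by auto
  have kL: "(LINT t:{0..T}|lborel. g t * F' (\<gamma> t)) = integral {0..T} k"
    using ac_hk[OF ki, of T] T unfolding k_def by auto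
  have agi: "set_integrable lborel {0..T} (\<lambda>t. \<bar>g t\<bar>)" using set_integrable_abs[OF gi] .
  have agT: "(\<lambda>t. \<bar>g t\<bar>) integrable_on {0..T}" using ac_hk[OF agi, of T] T by auto
  define \<Phi> where "\<Phi> t = F (\<gamma> t) - integral {0..t} k" for t
  have main: "\<bar>\<Phi> T - \<Phi> 0\<bar> \<le> \<epsilon> * integral {0..T} (\<lambda>t. \<bar>g t\<bar>)" if e: "\<epsilon> > 0" for \<epsilon>
  proof -
    obtain R where R0: "\<forall>x\<in>\<gamma> ` {0..T}. norm x \<le> R"
      using compact_imp_bounded[OF compact_continuous_image[OF cgam compact_Icc]]
      unfolding bounded_iff by blast
    have R: "\<And>t. t \<in> {0..T} \<Longrightarrow> \<bar>\<gamma> t\<bar> \<le> R" using R0 by auto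
    have "uniformly_continuous_on {-R..R} F'"
      by (rule compact_uniformly_continuous[OF continuous_on_subset[OF cF]]) auto
    then obtain \<eta> where \<eta>: "\<eta> > 0" and \<eta>F: "\<And>x x'. x \<in> {-R..R} \<Longrightarrow> x' \<in> {-R..R} \<Longrightarrow> dist x' x < \<eta> \<Longrightarrow> dist (F' x') (F' x) < \<epsilon>"
      unfolding uniformly_continuous_on_def using e by metis
    have "uniformly_continuous_on {0..T} \<gamma>"
      by (rule compact_uniformly_continuous[OF cgam]) auto
    then obtain \<delta> where \<delta>: "\<delta> > 0" and \<delta>g: "\<And>x x'. x \<in> {0..T} \<Longrightarrow> x' \<in> {0..T} \<Longrightarrow> dist x' x < \<delta> \<Longrightarrow> dist (\<gamma> x') (\<gamma> x) < \<eta>"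
      unfolding uniformly_continuous_on_def using \<eta> by metis
    show ?thesis
    proof -
      have "\<bar>\<Phi> T - \<Phi> 0\<bar> \<le> \<epsilon> * integral {0..T} (\<lambda>t. \<bar>g t\<bar>) - \<epsilon> * integral {0..0} (\<lambda>t. \<bar>g t\<bar>)"
      proof (rule local_to_global[OF T \<delta>, of \<Phi> "\<lambda>t. \<epsilon> * integral {0..t} (\<lambda>t. \<bar>g t\<bar>)"])
        fix s t assume st: "0 \<le> s" "s \<le> t" "t \<le> T" "t - s < \<delta>"
        have s0T: "s \<in> {0..T}" and t0T: "t \<in> {0..T}" using st by auto
        obtain \<xi> where \<xi>: "min (\<gamma> s) (\<gamma> t) \<le> \<xi>" "\<xi> \<le> max (\<gamma> s) (\<gamma> t)"
          "F (\<gamma> t) - F (\<gamma> s) = (\<gamma> t - \<gamma> s) * F' \<xi>"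
          using mvt_any[OF F] by blast
        have gt: "g integrable_on {0..t}" using ac_hk[OF gi t0T] by simp
        have gst: "g integrable_on {s..t}" by (rule integrable_on_subinterval[OF gT]) (use st in auto)
        have kt: "k integrable_on {0..t}" by (rule integrable_on_subinterval[OF kT]) (use st in auto)
        have kst: "k integrable_on {s..t}" by (rule integrable_on_subinterval[OF kT]) (use st in auto)
        have at: "(\<lambda>t. \<bar>g t\<bar>) integrable_on {0..t}" by (rule integrable_on_subinterval[OF agT]) (use st in auto)
        have ast: "(\<lambda>t. \<bar>g t\<bar>) integrable_on {s..t}" by (rule integrable_on_subinterval[OF agT]) (use st in auto)
        have "\<gamma> t - \<gamma> s = integral {0..t} g - integral {0..s} g"
          using gam2[OF s0T] gam2[OF t0T] by linarith
        also have "\<dots> = integral {s..t} g"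
          using Henstock_Kurzweil_Integration.integral_combine[OF st(1) st(2) gt] by simp
        finally have dg: "\<gamma> t - \<gamma> s = integral {s..t} g" .
        have dk: "integral {0..t} k - integral {0..s} k = integral {s..t} k"
          using Henstock_Kurzweil_Integration.integral_combine[OF st(1) st(2) kt] by simp
        have da: "integral {0..t} (\<lambda>t. \<bar>g t\<bar>) - integral {0..s} (\<lambda>t. \<bar>g t\<bar>) = integral {s..t} (\<lambda>t. \<bar>g t\<bar>)"
          using Henstock_Kurzweil_Integration.integral_combine[OF st(1) st(2) at] by simp
        have "\<Phi> t - \<Phi> s = (\<gamma> t - \<gamma> s) * F' \<xi> - integral {s..t} k"
          unfolding \<Phi>_def using \<xi>(3) dk by simp
        also have "\<dots> = integral {s..t} (\<lambda>r. g r * F' \<xi>) - integral {s..t} k"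
          using dg by simp
        also have "\<dots> = integral {s..t} (\<lambda>r. g r * F' \<xi> - k r)"
          by (rule integral_diff[symmetric]) (use integrable_on_mult_left[OF gst] kst in auto)
        finally have e1: "\<Phi> t - \<Phi> s = integral {s..t} (\<lambda>r. g r * (F' \<xi> - F' (\<gamma> r)))"
          unfolding k_def by (simp add: algebra_simps)
        have "\<bar>integral {s..t} (\<lambda>r. g r * (F' \<xi> - F' (\<gamma> r)))\<bar> \<le> integral {s..t} (\<lambda>r. \<epsilon> * \<bar>g r\<bar>)"
        proof -
          have "norm (integral {s..t} (\<lambda>r. g r * (F' \<xi> - F' (\<gamma> r)))) \<le> integral {s..t} (\<lambda>r. \<epsilon> * \<bar>g r\<bar>)"
          proof (rule Henstock_Kurzweil_Integration.integral_norm_bound_integral)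
            have "(\<lambda>r. g r * F' \<xi> - k r) integrable_on {s..t}"
              using integrable_on_mult_left[OF gst] kst by (intro integrable_diff)
            then show "(\<lambda>r. g r * (F' \<xi> - F' (\<gamma> r))) integrable_on {s..t}"
              unfolding k_def by (simp add: algebra_simps)
            show "(\<lambda>r. \<epsilon> * \<bar>g r\<bar>) integrable_on {s..t}" using integrable_on_mult_right[OF ast] .
          next
            fix r assume r: "r \<in> {s..t}"
            then have r0T: "r \<in> {0..T}" using st by auto
            have d1: "dist (\<gamma> s) (\<gamma> r) < \<eta>" using \<delta>g[OF r0T s0T] r st by (simp add: dist_real_def)
            have d2: "dist (\<gamma> t) (\<gamma> r) < \<eta>" using \<delta>g[OF r0T t0T] r st by (simp add: dist_real_def)
            have "dist \<xi> (\<gamma> r) < \<eta>" using d1 d2 \<xi>(1,2) unfolding dist_real_def by linarith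
            moreover have "\<xi> \<in> {-R..R}" using R[OF s0T] R[OF t0T] \<xi>(1,2) by auto
            moreover have "\<gamma> r \<in> {-R..R}" using R[OF r0T] by auto
            ultimately have "dist (F' \<xi>) (F' (\<gamma> r)) < \<epsilon>" using \<eta>F by blast
            then have "\<bar>F' \<xi> - F' (\<gamma> r)\<bar> \<le> \<epsilon>" by (simp add: dist_real_def)
            then have "\<bar>g r\<bar> * \<bar>F' \<xi> - F' (\<gamma> r)\<bar> \<le> \<bar>g r\<bar> * \<epsilon>" by (intro mult_left_mono) auto
            then show "norm (g r * (F' \<xi> - F' (\<gamma> r))) \<le> \<epsilon> * \<bar>g r\<bar>" by (simp add: abs_mult mult.commute)
          qed
          then show ?thesis by simp
        qed
        also have "\<dots> = \<epsilon> * integral {s..t} (\<lambda>r. \<bar>g r\<bar>)" by simp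
        also have "\<dots> = \<epsilon> * integral {0..t} (\<lambda>t. \<bar>g t\<bar>) - \<epsilon> * integral {0..s} (\<lambda>t. \<bar>g t\<bar>)"
          using da by (simp add: algebra_simps)
        finally show "\<bar>\<Phi> t - \<Phi> s\<bar> \<le> \<epsilon> * integral {0..t} (\<lambda>t. \<bar>g t\<bar>) - \<epsilon> * integral {0..s} (\<lambda>t. \<bar>g t\<bar>)"
          using e1 by simp
      qed
      then show ?thesis by simp
    qed
  qed
  have "\<Phi> T = \<Phi> 0"
  proof (rule ccontr)
    assume ne: "\<Phi> T \<noteq> \<Phi> 0"
    define I where "I = integral {0..T} (\<lambda>t. \<bar>g t\<bar>)"
    have I0: "I \<ge> 0" unfolding I_def by (rule integral_nonneg[OF agT]) auto
    define \<epsilon> where "\<epsilon> = \<bar>\<Phi> T - \<Phi> 0\<bar> / (2 * (I + 1))"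
    have e: "\<epsilon> > 0" unfolding \<epsilon>_def using ne I0 by auto
    have "\<bar>\<Phi> T - \<Phi> 0\<bar> \<le> \<epsilon> * I" using main[OF e] unfolding I_def .
    also have "\<dots> = \<bar>\<Phi> T - \<Phi> 0\<bar> * (I / (2 * (I + 1)))"
      unfolding \<epsilon>_def by simp
    also have "\<dots> < \<bar>\<Phi> T - \<Phi> 0\<bar> * 1"
      using ne I0 by (intro mult_strict_left_mono) auto
    finally show False by simp
  qed
  then show "F (\<gamma> T) - F (\<gamma> 0) = (LINT t:{0..T}|lborel. g t * F' (\<gamma> t))"
    unfolding \<Phi>_def kL by simp
qed


lemma nn_ge_LINT:
  fixes k L :: "real \<Rightarrow> real"
  assumes ki: "set_integrable lborel A k" and A: "A \<in> sets lborel"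
    and le: "\<And>t. t \<in> A \<Longrightarrow> k t \<le> L t"
  shows "ennreal (LINT t:A|lborel. k t) \<le> (\<integral>\<^sup>+t. ennreal (L t) * indicator A t \<partial>lborel)"
proof -
  define k' where "k' = (\<lambda>t. indicator A t *\<^sub>R k t)"
  have k'i: "integrable lborel k'" using ki unfolding set_integrable_def k'_def .
  have mi: "integrable lborel (\<lambda>t. max 0 (k' t))"
    using k'i by (intro integrable_max) auto
  have "(LINT t:A|lborel. k t) = integral\<^sup>L lborel k'"
    unfolding set_lebesgue_integral_def k'_def ..
  also have "\<dots> \<le> integral\<^sup>L lborel (\<lambda>t. max 0 (k' t))"
    by (intro integral_mono k'i mi) auto
  finally have "ennreal (LINT t:A|lborel. k t) \<le> ennreal (integral\<^sup>L lborel (\<lambda>t. max 0 (k' t)))"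
    by (rule ennreal_leI)
  also have "\<dots> = (\<integral>\<^sup>+t. ennreal (max 0 (k' t)) \<partial>lborel)"
    by (rule nn_integral_eq_integral[symmetric]) (use mi in auto)
  also have "\<dots> \<le> (\<integral>\<^sup>+t. ennreal (L t) * indicator A t \<partial>lborel)"
  proof (intro nn_integral_mono)
    fix t
    show "ennreal (max 0 (k' t)) \<le> ennreal (L t) * indicator A t"
    proof (cases "t \<in> A")
      case True
      then have "max 0 (k' t) \<le> max 0 (L t)" using le[OF True] unfolding k'_def by simp
      then have "ennreal (max 0 (k' t)) \<le> ennreal (max 0 (L t))" by (rule ennreal_leI)
      then show ?thesis using True by (simp add: ennreal_max_0)
    next
      case False then show ?thesis unfolding k'_def by simp
    qed
  qed
  finally show ?thesis .
qed

lemma nn_le_LINT: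
  fixes k L :: "real \<Rightarrow> real"
  assumes ki: "set_integrable lborel A k"
    and le: "\<And>t. t \<in> A \<Longrightarrow> 0 \<le> L t \<and> L t \<le> k t"
  shows "(\<integral>\<^sup>+t. ennreal (L t) * indicator A t \<partial>lborel) \<le> ennreal (LINT t:A|lborel. k t)"
proof -
  define k' where "k' = (\<lambda>t. indicator A t *\<^sub>R k t)"
  have k'i: "integrable lborel k'" using ki unfolding set_integrable_def k'_def .
  have k0: "0 \<le> k' t" for t using le[of t] unfolding k'_def by (cases "t \<in> A") auto
  have "(\<integral>\<^sup>+t. ennreal (L t) * indicator A t \<partial>lborel) \<le> (\<integral>\<^sup>+t. ennreal (k' t) \<partial>lborel)"
  proof (intro nn_integral_mono)
    fix t show "ennreal (L t) * indicator A t \<le> ennreal (k' t)"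
      using le[of t] unfolding k'_def by (cases "t \<in> A") (auto intro: ennreal_leI)
  qed
  also have "\<dots> = ennreal (integral\<^sup>L lborel k')"
    by (rule nn_integral_eq_integral) (use k'i k0 in auto)
  also have "integral\<^sup>L lborel k' = (LINT t:A|lborel. k t)"
    unfolding set_lebesgue_integral_def k'_def ..
  finally show ?thesis .
qed

lemma pos_part_le_lag:
  fixes g f :: real
  shows "g * max 0 f \<le> (g + f)^2 / 4" and "g * (- max 0 (- f)) \<le> (g + f)^2 / 4"
proof -
  have e: "(g + f)^2 / 4 - g * f = (g - f)^2 / 4" by (simp add: power2_eq_square algebra_simps)
  have "(g - f)^2 / 4 \<ge> 0" by simp
  then have "g * f \<le> (g + f)^2 / 4" using e by linarith
  moreover have "0 \<le> (g + f)^2 / 4" by simp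
  ultimately show "g * max 0 f \<le> (g + f)^2 / 4" "g * (- max 0 (- f)) \<le> (g + f)^2 / 4"
    by (auto simp: max_def)
qed

lemma action_lower:
  fixes U P Q :: "real \<Rightarrow> real"
  assumes T: "0 \<le> T" and ac: "ac_path T \<gamma> g"
    and cf: "continuous_on UNIV (deriv U)"
    and P: "\<And>z. (P has_real_derivative max 0 (deriv U z)) (at z)"
    and Q: "\<And>z. (Q has_real_derivative max 0 (- deriv U z)) (at z)"
  shows "ennreal (max (P (\<gamma> T) - P (\<gamma> 0)) (Q (\<gamma> 0) - Q (\<gamma> T))) \<le> action U T \<gamma> g"
proof -
  have gi: "set_integrable lborel {0..T} g" and gam: "\<forall>t\<in>{0..T}. \<gamma> t = \<gamma> 0 + (LINT s:{0..t}|lborel. g s)"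
    using ac unfolding ac_path_def by blast+
  have act: "action U T \<gamma> g = (\<integral>\<^sup>+t. ennreal ((g t + deriv U (\<gamma> t))^2 / 4) * indicator {0..T} t \<partial>lborel)"
    unfolding action_def Lag_def ..
  have cP: "continuous_on UNIV (\<lambda>z. max 0 (deriv U z))"
    by (intro continuous_intros cf)
  have cQ: "continuous_on UNIV (\<lambda>z. - max 0 (- deriv U z))"
    by (intro continuous_intros cf)
  have Q': "\<And>z. ((\<lambda>z. - Q z) has_real_derivative - max 0 (- deriv U z)) (at z)"
    using Q by (intro derivative_intros)
  note c1 = chain_rule_ac[OF T gi gam P cP]
  note c2 = chain_rule_ac[OF T gi gam Q' cQ]
  have "ennreal (P (\<gamma> T) - P (\<gamma> 0)) \<le> action U T \<gamma> g"
    unfolding c1(2) act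
    by (rule nn_ge_LINT[OF c1(1)]) (simp, rule pos_part_le_lag(1))
  moreover have "ennreal (Q (\<gamma> 0) - Q (\<gamma> T)) \<le> action U T \<gamma> g"
  proof -
    have "Q (\<gamma> 0) - Q (\<gamma> T) = (- Q (\<gamma> T)) - (- Q (\<gamma> 0))" by simp
    also have "\<dots> = (LINT t:{0..T}|lborel. g t * - max 0 (- deriv U (\<gamma> t)))" using c2(2) .
    finally have e: "Q (\<gamma> 0) - Q (\<gamma> T) = \<dots>" .
    show ?thesis unfolding e act
      by (rule nn_ge_LINT[OF c2(1)]) (simp, rule pos_part_le_lag(2))
  qed
  ultimately show ?thesis by (auto simp: max_def)
qed


lemma inverse_flow:
  fixes V :: "real \<Rightarrow> real" and x :: real
  assumes cV: "continuous_on UNIV V" and d: "\<delta> > 0" and Vpos: "\<And>z. \<delta> \<le> V z" and Vb: "\<And>z. V z \<le> K"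
  shows "\<exists>\<Gamma> R. (\<forall>z. (R has_real_derivative 1 / V z) (at z)) \<and> R x = 0 \<and> (\<forall>t. R (\<Gamma> t) = t)
     \<and> (\<forall>z. \<Gamma> (R z) = z) \<and> (\<forall>t. (\<Gamma> has_real_derivative V (\<Gamma> t)) (at t))
     \<and> (\<forall>a b. a \<le> b \<longrightarrow> R a \<le> R b)"
proof -
  have Vp: "V z > 0" for z using Vpos[of z] d by linarith
  have K: "K > 0" using Vb[of 0] Vp[of 0] by linarith
  have "continuous_on UNIV (\<lambda>z. 1 / V z)"
    using Vp by (intro continuous_intros cV) (auto simp: less_imp_neq[symmetric])
  then obtain R0 where R0: "\<And>z. (R0 has_real_derivative 1 / V z) (at z)"
    using antideriv_exists by blast
  define R where "R z = R0 z - R0 x" for z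
  have R: "(R has_real_derivative 1 / V z) (at z)" for z
    unfolding R_def[abs_def] using R0[of z] by (auto intro!: derivative_eq_intros)
  have Rx: "R x = 0" unfolding R_def by simp
  have Rinc: "R a < R b" if "a < b" for a b
  proof (rule DERIV_pos_imp_increasing[OF that])
    fix z show "\<exists>y. (R has_real_derivative y) (at z) \<and> 0 < y"
      using R[of z] Vp[of z] by (intro exI[of _ "1 / V z"]) auto
  qed
  have Rmono: "R a \<le> R b" if "a \<le> b" for a b
    using Rinc[of a b] that by (cases "a = b") auto
  have Rgrow: "R b - R a \<ge> (b - a) / K" if "a \<le> b" for a b
  proof -
    obtain \<xi> where "R b - R a = (b - a) * (1 / V \<xi>)"
      using mvt_any[of R "\<lambda>z. 1 / V z" a b] R by blast
    moreover have "1 / K \<le> 1 / V \<xi>"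
      using Vb[of \<xi>] Vp[of \<xi>] by (intro divide_left_mono) auto
    ultimately show ?thesis using that
      by (simp add: divide_inverse) (metis diff_ge_0_iff_ge mult_left_mono mult.right_neutral)
  qed
  have cR: "isCont R z" for z using R[of z] by (rule DERIV_isCont)
  have surj: "\<exists>z. R z = t" for t
  proof -
    define a where "a = x - \<bar>t\<bar> * K"
    define b where "b = x + \<bar>t\<bar> * K"
    have ab: "a \<le> b" unfolding a_def b_def using K by auto
    have "R b - R x \<ge> (b - x) / K" using Rgrow[of x b] K unfolding b_def by auto
    then have "R b \<ge> \<bar>t\<bar>" unfolding b_def using K Rx by auto
    moreover have "R x - R a \<ge> (x - a) / K" using Rgrow[of a x] K unfolding a_def by auto
    then have "R a \<le> - \<bar>t\<bar>" unfolding a_def using K Rx by auto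
    ultimately have "R a \<le> t" "t \<le> R b" by auto
    then show ?thesis using IVT[of R a t b] ab cR by blast
  qed
  have inj: "inj R" by (intro injI) (metis Rinc linorder_neqE_linordered_idom order_less_irrefl)
  define \<Gamma> where "\<Gamma> = inv R"
  have RG: "R (\<Gamma> t) = t" for t unfolding \<Gamma>_def using surj by (metis f_inv_into_f rangeI)
  have GR: "\<Gamma> (R z) = z" for z unfolding \<Gamma>_def using inj by simp
  have cG: "isCont \<Gamma> t" for t
    using isCont_inverse_function[where d=1 and x="\<Gamma> t" and f=R and g=\<Gamma>] GR cR RG by simp
  have dG: "(\<Gamma> has_real_derivative V (\<Gamma> t)) (at t)" for t
  proof -
    have "(\<Gamma> has_real_derivative inverse (1 / V (\<Gamma> t))) (at t)"
      by (rule DERIV_inverse_function[where f=R and g=\<Gamma> and x=t and a="t - 1" and b="t + 1"]) (use R Vp RG cG in \<open>auto simp: less_imp_neq[symmetric]\<close>)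
    then show ?thesis by simp
  qed
  show ?thesis using R Rx RG GR dG Rmono by blast
qed


lemma ac_from_deriv:
  fixes \<gamma> g :: "real \<Rightarrow> real"
  assumes T: "0 \<le> T" and cg: "continuous_on {0..T} \<gamma>" and S: "finite S"
    and d: "\<And>t. t \<in> {0<..<T} - S \<Longrightarrow> (\<gamma> has_real_derivative g t) (at t)"
    and gi: "set_integrable lborel {0..T} g"
  shows "ac_path T \<gamma> g"
  unfolding ac_path_def
proof (intro conjI gi ballI)
  fix t assume t: "t \<in> {0..T}"
  have "(g has_integral (\<gamma> t - \<gamma> 0)) {0..t}"
  proof (rule fundamental_theorem_of_calculus_interior_strong[OF S])
    show "0 \<le> t" using t by auto
    show "continuous_on {0..t} \<gamma>" by (rule continuous_on_subset[OF cg]) (use t in auto)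
    fix x assume "x \<in> {0<..<t} - S"
    then have "x \<in> {0<..<T} - S" using t by auto
    then show "(\<gamma> has_vector_derivative g x) (at x)"
      using d has_real_derivative_iff_has_vector_derivative by blast
  qed
  then have "integral {0..t} g = \<gamma> t - \<gamma> 0" by (rule integral_unique)
  then show "\<gamma> t = \<gamma> 0 + (LINT s:{0..t}|lborel. g s)" using ac_hk(2)[OF gi t] by simp
qed

lemma flow_ineq:
  fixes f \<delta> :: real
  assumes "\<delta> > 0"
  shows "((\<bar>f\<bar> + \<delta>) + f)^2 \<le> 4 * (\<bar>f\<bar> + \<delta>) * (max 0 f + \<delta>)"
proof (cases "f \<ge> 0")
  case True
  then have "((\<bar>f\<bar> + \<delta>) + f)^2 = 4*f*f + 4*f*\<delta> + \<delta>*\<delta>" by (simp add: power2_eq_square algebra_simps)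
  moreover have "4 * (\<bar>f\<bar> + \<delta>) * (max 0 f + \<delta>) = 4*f*f + 8*f*\<delta> + 4*\<delta>*\<delta>" using True by (simp add: algebra_simps)
  moreover have "0 \<le> f*\<delta>" "0 \<le> \<delta>*\<delta>" using True assms by auto
  ultimately show ?thesis by linarith
next
  case False
  then have "((\<bar>f\<bar> + \<delta>) + f)^2 = \<delta>*\<delta>" by (simp add: power2_eq_square)
  moreover have "4 * (\<bar>f\<bar> + \<delta>) * (max 0 f + \<delta>) = 4*\<delta>*\<delta> - 4*f*\<delta>" using False by (simp add: algebra_simps)
  moreover have "0 \<le> (-f)*\<delta>" using False assms by (intro mult_nonneg_nonneg) auto
  moreover have "0 \<le> \<delta>*\<delta>" by simp
  ultimately show ?thesis by linarith
qed

lemma ub_right: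
  fixes f :: "real \<Rightarrow> real"
  assumes cf: "continuous_on UNIV f" and bnd: "\<And>z. \<bar>f z\<bar> \<le> M" and fx: "f x = 0"
    and xy: "x \<le> y" and d: "\<delta> > 0"
  shows "\<exists>T1\<ge>0. \<forall>T\<ge>T1. \<exists>\<gamma> g. ac_path T \<gamma> g \<and> \<gamma> 0 = x \<and> \<gamma> T = y \<and>
            (\<forall>t\<in>{0..T}. (g t + f (\<gamma> t))^2 \<le> 4 * g t * (max 0 (f (\<gamma> t)) + \<delta>))"
proof -
  define V where "V z = \<bar>f z\<bar> + \<delta>" for z
  have cV: "continuous_on UNIV V" unfolding V_def[abs_def] by (intro continuous_intros cf)
  have Vl: "\<delta> \<le> V z" for z unfolding V_def by simp
  have Vu: "V z \<le> M + \<delta>" for z unfolding V_def using bnd[of z] by simp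
  obtain \<Gamma> R where R: "\<And>z. (R has_real_derivative 1 / V z) (at z)" and Rx: "R x = 0"
    and RG: "\<And>t. R (\<Gamma> t) = t" and GR: "\<And>z. \<Gamma> (R z) = z" and dG: "\<And>t. (\<Gamma> has_real_derivative V (\<Gamma> t)) (at t)"
    and Rm: "\<And>a b. a \<le> b \<Longrightarrow> R a \<le> R b"
    using inverse_flow[OF cV d Vl Vu, of x] by metis
  have cG: "continuous_on UNIV \<Gamma>"
    using dG by (intro continuous_at_imp_continuous_on ballI DERIV_isCont) 
  have Ry: "R y \<ge> 0" using Rm[OF xy] Rx by simp
  show ?thesis
  proof (intro exI[of _ "R y"] conjI allI impI Ry)
    fix T assume T: "R y \<le> T"
    define s0 where "s0 = T - R y"
    have s0: "0 \<le> s0" unfolding s0_def using T by simp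
    define \<gamma> where "\<gamma> t = \<Gamma> (max 0 (t - s0))" for t
    define g where "g t = (if t \<le> s0 then 0 else V (\<Gamma> (t - s0)))" for t
    have T0: "0 \<le> T" using T Ry by linarith
    have g0: "\<gamma> 0 = x" unfolding \<gamma>_def using s0 GR[of x] Rx by simp
    have gT: "\<gamma> T = y" unfolding \<gamma>_def s0_def using GR[of y] Ry by simp
    have cgam: "continuous_on {0..T} \<gamma>"
      unfolding \<gamma>_def[abs_def]
      by (rule continuous_on_compose2[OF cG]) (auto intro!: continuous_intros)
    have cVG: "continuous_on UNIV (\<lambda>t. V (\<Gamma> (t - s0)))"
      by (rule continuous_on_compose2[OF cV]) (auto intro!: continuous_on_compose2[OF cG] continuous_intros)
    have mg: "g \<in> borel_measurable lborel"
    proof -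
      have "g = (\<lambda>t. indicator {s0<..} t * V (\<Gamma> (t - s0)))"
        unfolding g_def by (rule ext) (simp split: split_indicator)
      moreover have "(\<lambda>t. indicator {s0<..} t * V (\<Gamma> (t - s0))) \<in> borel_measurable borel"
        using borel_measurable_continuous_onI[OF cVG] by measurable
      ultimately show ?thesis by simp
    qed
    have gi: "set_integrable lborel {0..T} g"
      unfolding set_integrable_def
    proof (rule integrableI_bounded_set_indicator[where B="M + \<delta>"])
      show "g \<in> borel_measurable lborel" by (rule mg)
      show "emeasure lborel {0..T} < \<infinity>" using T0 by simp
      show "AE x in lborel. x \<in> {0..T} \<longrightarrow> norm (g x) \<le> M + \<delta>"
      proof (intro AE_I2 impI)
        fix t show "norm (g t) \<le> M + \<delta>" using Vu[of "\<Gamma> (t - s0)"] Vl[of "\<Gamma> (t - s0)"] d unfolding g_def by auto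
      qed
    qed simp
    have ac: "ac_path T \<gamma> g"
    proof (rule ac_from_deriv[OF T0 cgam, of "{s0}"])
      show "set_integrable lborel {0..T} g" by (rule gi)
      fix t assume t: "t \<in> {0<..<T} - {s0}"
      show "(\<gamma> has_real_derivative g t) (at t)"
      proof (cases "t < s0")
        case True
        have gt: "g t = 0" unfolding g_def using True by simp
        have "((\<lambda>t. \<Gamma> 0) has_real_derivative 0) (at t)" by simp
        then have "(\<gamma> has_real_derivative 0) (at t)"
        proof (rule has_field_derivative_transform_within_open[where S="{..<s0}"])
          show "t \<in> {..<s0}" using True by simp
          fix z assume "z \<in> {..<s0}" then show "\<Gamma> 0 = \<gamma> z" unfolding \<gamma>_def by simp
        qed simp
        then show ?thesis using gt by simp
      next
        case False
        then have ts: "s0 < t" using t by auto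
        have "((\<lambda>t. \<Gamma> (t - s0)) has_real_derivative V (\<Gamma> (t - s0)) * 1) (at t)"
          by (rule DERIV_chain2[OF dG]) (auto intro!: derivative_eq_intros)
        then have "((\<lambda>t. \<Gamma> (t - s0)) has_real_derivative g t) (at t)" using ts unfolding g_def by simp
        then show ?thesis
        proof (rule has_field_derivative_transform_within_open[where S="{s0<..}"])
          show "t \<in> {s0<..}" using ts by simp
          fix z assume "z \<in> {s0<..}" then show "\<Gamma> (z - s0) = \<gamma> z" unfolding \<gamma>_def by simp
        qed simp
      qed
    qed simp
    have pw: "(g t + f (\<gamma> t))^2 \<le> 4 * g t * (max 0 (f (\<gamma> t)) + \<delta>)" for t
    proof (cases "t \<le> s0")
      case True
      then have "\<gamma> t = x" unfolding \<gamma>_def using GR[of x] Rx by simp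
      then show ?thesis using True fx unfolding g_def by simp
    next
      case False
      then have "\<gamma> t = \<Gamma> (t - s0)" "g t = V (\<gamma> t)" unfolding \<gamma>_def g_def by auto
      then show ?thesis unfolding V_def using flow_ineq[OF d, of "f (\<gamma> t)"] by simp
    qed
    show "\<exists>\<gamma> g. ac_path T \<gamma> g \<and> \<gamma> 0 = x \<and> \<gamma> T = y \<and>
            (\<forall>t\<in>{0..T}. (g t + f (\<gamma> t))^2 \<le> 4 * g t * (max 0 (f (\<gamma> t)) + \<delta>))"
      using ac g0 gT pw by blast
  qed
qed


lemma ub_left:
  fixes f :: "real \<Rightarrow> real"
  assumes cf: "continuous_on UNIV f" and bnd: "\<And>z. \<bar>f z\<bar> \<le> M" and fx: "f x = 0"
    and xy: "y \<le> x" and d: "\<delta> > 0"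
  shows "\<exists>T1\<ge>0. \<forall>T\<ge>T1. \<exists>\<gamma> g. ac_path T \<gamma> g \<and> \<gamma> 0 = x \<and> \<gamma> T = y \<and>
            (\<forall>t\<in>{0..T}. (g t + f (\<gamma> t))^2 \<le> 4 * (- g t) * (max 0 (- f (\<gamma> t)) + \<delta>))"
proof -
  define f' where "f' z = - f (- z)" for z
  have cf': "continuous_on UNIV f'" unfolding f'_def[abs_def]
    by (intro continuous_intros continuous_on_compose2[OF cf]) auto
  have bnd': "\<bar>f' z\<bar> \<le> M" for z unfolding f'_def using bnd[of "-z"] by simp
  have fx': "f' (-x) = 0" unfolding f'_def using fx by simp
  obtain T1 where T1: "T1 \<ge> 0" and H: "\<forall>T\<ge>T1. \<exists>\<gamma> g. ac_path T \<gamma> g \<and> \<gamma> 0 = -x \<and> \<gamma> T = -y \<and>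
            (\<forall>t\<in>{0..T}. (g t + f' (\<gamma> t))^2 \<le> 4 * g t * (max 0 (f' (\<gamma> t)) + \<delta>))"
    using ub_right[OF cf' bnd' fx' _ d, of "-y"] xy by auto
  show ?thesis
  proof (intro exI[of _ T1] conjI allI impI T1)
    fix T assume T: "T1 \<le> T"
    obtain \<gamma> g where ac: "ac_path T \<gamma> g" and g0: "\<gamma> 0 = -x" and gT: "\<gamma> T = -y"
      and pw: "\<forall>t\<in>{0..T}. (g t + f' (\<gamma> t))^2 \<le> 4 * g t * (max 0 (f' (\<gamma> t)) + \<delta>)"
      using H T by blast
    have gi: "set_integrable lborel {0..T} g" and gam: "\<forall>t\<in>{0..T}. \<gamma> t = \<gamma> 0 + (LINT s:{0..t}|lborel. g s)"
      using ac unfolding ac_path_def by blast+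
    have ac': "ac_path T (\<lambda>t. - \<gamma> t) (\<lambda>t. - g t)"
      unfolding ac_path_def
    proof (intro conjI ballI)
      show "set_integrable lborel {0..T} (\<lambda>t. - g t)"
        using set_integrable_mult_right[OF gi, of "-1"] by simp
      fix t assume t: "t \<in> {0..T}"
      have "\<gamma> t = \<gamma> 0 + (LINT s:{0..t}|lborel. g s)" using gam t by blast
      moreover have "set_integrable lborel {0..t} g"
        by (rule set_integrable_subset[OF gi]) (use t in auto)
      then have "(LINT s:{0..t}|lborel. - g s) = - (LINT s:{0..t}|lborel. g s)"
        by (rule set_integral_uminus)
      ultimately show "- \<gamma> t = - \<gamma> 0 + (LINT s:{0..t}|lborel. - g s)"
        by simp
    qed
    have pw': "\<forall>t\<in>{0..T}. (- g t + f (- \<gamma> t))^2 \<le> 4 * (- (- g t)) * (max 0 (- f (- \<gamma> t)) + \<delta>)"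
    proof
      fix t assume t: "t \<in> {0..T}"
      have "(- g t + f (- \<gamma> t))^2 = (g t + f' (\<gamma> t))^2" unfolding f'_def
        by (simp add: power2_eq_square algebra_simps)
      then show "(- g t + f (- \<gamma> t))^2 \<le> 4 * (- (- g t)) * (max 0 (- f (- \<gamma> t)) + \<delta>)"
        using pw t unfolding f'_def by simp
    qed
    show "\<exists>\<gamma> g. ac_path T \<gamma> g \<and> \<gamma> 0 = x \<and> \<gamma> T = y \<and>
            (\<forall>t\<in>{0..T}. (g t + f (\<gamma> t))^2 \<le> 4 * (- g t) * (max 0 (- f (\<gamma> t)) + \<delta>))"
      by (rule exI[of _ "\<lambda>t. - \<gamma> t"], rule exI[of _ "\<lambda>t. - g t"]) (use ac' g0 gT pw' in simp)
  qed
qed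

lemma ub_cost_right:
  fixes U P :: "real \<Rightarrow> real"
  assumes T: "0 \<le> T" and ac: "ac_path T \<gamma> g"
    and cf: "continuous_on UNIV (deriv U)"
    and P: "\<And>z. (P has_real_derivative max 0 (deriv U z)) (at z)"
    and pw: "\<forall>t\<in>{0..T}. (g t + deriv U (\<gamma> t))^2 \<le> 4 * g t * (max 0 (deriv U (\<gamma> t)) + \<delta>)"
  shows "action U T \<gamma> g \<le> ennreal (P (\<gamma> T) - P (\<gamma> 0) + \<delta> * (\<gamma> T - \<gamma> 0))"
proof -
  have gi: "set_integrable lborel {0..T} g" and gam: "\<forall>t\<in>{0..T}. \<gamma> t = \<gamma> 0 + (LINT s:{0..t}|lborel. g s)"
    using ac unfolding ac_path_def by blast+
  have F: "\<And>z. ((\<lambda>z. P z + \<delta> * z) has_real_derivative max 0 (deriv U z) + \<delta>) (at z)"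
    using P by (auto intro!: derivative_eq_intros)
  have cF: "continuous_on UNIV (\<lambda>z. max 0 (deriv U z) + \<delta>)" by (intro continuous_intros cf)
  note c = chain_rule_ac[OF T gi gam F cF]
  have act: "action U T \<gamma> g = (\<integral>\<^sup>+t. ennreal ((g t + deriv U (\<gamma> t))^2 / 4) * indicator {0..T} t \<partial>lborel)"
    unfolding action_def Lag_def ..
  have "action U T \<gamma> g \<le> ennreal (LINT t:{0..T}|lborel. g t * (max 0 (deriv U (\<gamma> t)) + \<delta>))"
    unfolding act
  proof (rule nn_le_LINT[OF c(1)])
    fix t assume t: "t \<in> {0..T}"
    have "(g t + deriv U (\<gamma> t))^2 \<le> 4 * g t * (max 0 (deriv U (\<gamma> t)) + \<delta>)" using pw t by blast
    then show "0 \<le> (g t + deriv U (\<gamma> t))^2 / 4 \<and> (g t + deriv U (\<gamma> t))^2 / 4 \<le> g t * (max 0 (deriv U (\<gamma> t)) + \<delta>)"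
      by simp
  qed
  also have "\<dots> = ennreal (P (\<gamma> T) - P (\<gamma> 0) + \<delta> * (\<gamma> T - \<gamma> 0))"
    using c(2) by (simp add: algebra_simps)
  finally show ?thesis .
qed

lemma ub_cost_left:
  fixes U Q :: "real \<Rightarrow> real"
  assumes T: "0 \<le> T" and ac: "ac_path T \<gamma> g"
    and cf: "continuous_on UNIV (deriv U)"
    and Q: "\<And>z. (Q has_real_derivative max 0 (- deriv U z)) (at z)"
    and pw: "\<forall>t\<in>{0..T}. (g t + deriv U (\<gamma> t))^2 \<le> 4 * (- g t) * (max 0 (- deriv U (\<gamma> t)) + \<delta>)"
  shows "action U T \<gamma> g \<le> ennreal (Q (\<gamma> 0) - Q (\<gamma> T) + \<delta> * (\<gamma> 0 - \<gamma> T))"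
proof -
  have gi: "set_integrable lborel {0..T} g" and gam: "\<forall>t\<in>{0..T}. \<gamma> t = \<gamma> 0 + (LINT s:{0..t}|lborel. g s)"
    using ac unfolding ac_path_def by blast+
  have F: "\<And>z. ((\<lambda>z. - Q z - \<delta> * z) has_real_derivative - (max 0 (- deriv U z) + \<delta>)) (at z)"
    using Q by (auto intro!: derivative_eq_intros)
  have cF: "continuous_on UNIV (\<lambda>z. - (max 0 (- deriv U z) + \<delta>))" by (intro continuous_intros cf)
  note c = chain_rule_ac[OF T gi gam F cF]
  have act: "action U T \<gamma> g = (\<integral>\<^sup>+t. ennreal ((g t + deriv U (\<gamma> t))^2 / 4) * indicator {0..T} t \<partial>lborel)"
    unfolding action_def Lag_def ..
  have "action U T \<gamma> g \<le> ennreal (LINT t:{0..T}|lborel. g t * - (max 0 (- deriv U (\<gamma> t)) + \<delta>))"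
    unfolding act
  proof (rule nn_le_LINT[OF c(1)])
    fix t assume t: "t \<in> {0..T}"
    have "(g t + deriv U (\<gamma> t))^2 \<le> 4 * (- g t) * (max 0 (- deriv U (\<gamma> t)) + \<delta>)" using pw t by blast
    then show "0 \<le> (g t + deriv U (\<gamma> t))^2 / 4 \<and> (g t + deriv U (\<gamma> t))^2 / 4 \<le> g t * - (max 0 (- deriv U (\<gamma> t)) + \<delta>)"
      by (simp add: algebra_simps)
  qed
  also have "\<dots> = ennreal (Q (\<gamma> 0) - Q (\<gamma> T) + \<delta> * (\<gamma> 0 - \<gamma> T))"
    using c(2) by (simp add: algebra_simps)
  finally show ?thesis .
qed


definition Dd :: "(real \<Rightarrow> real) \<Rightarrow> (real \<Rightarrow> real) \<Rightarrow> real \<Rightarrow> real \<Rightarrow> real" where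
  "Dd P Q x y = max (P y - P x) (Q x - Q y)"

lemma mono_of_deriv:
  fixes P h :: "real \<Rightarrow> real"
  assumes P: "\<And>z. (P has_real_derivative max 0 (h z)) (at z)" and "a \<le> b"
  shows "P a \<le> P b"
  by (rule DERIV_nonneg_imp_nondecreasing[OF \<open>a \<le> b\<close>]) (use P in \<open>auto intro!: exI\<close>)

lemma enn2real_squeeze:
  fixes I :: ennreal
  assumes a: "0 \<le> a" and lo: "ennreal a \<le> I" and up: "\<And>e. e > 0 \<Longrightarrow> I \<le> ennreal (a + e)"
  shows "enn2real I = a"
proof -
  have "I \<le> ennreal (a + 1)" using up[of 1] by simp
  moreover have "ennreal (a + 1) < \<infinity>" by simp
  ultimately have fin: "I < \<infinity>" by (rule le_less_trans)
  then obtain r where r: "I = ennreal r" "0 \<le> r" using ennreal_cases[of I] by auto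
  have "a \<le> r" using lo r a by (simp add: ennreal_le_iff)
  moreover have "r \<le> a"
  proof (rule field_le_epsilon)
    fix e :: real assume "0 < e"
    then have "ennreal r \<le> ennreal (a + e)" using up[of e] r by simp
    then show "r \<le> a + e" using a \<open>0 < e\<close> by (subst (asm) ennreal_le_iff) auto
  qed
  ultimately show ?thesis using r by simp
qed

locale pot =
  fixes U P Q :: "real \<Rightarrow> real" and M :: real
  assumes cf: "continuous_on UNIV (deriv U)"
    and bnd: "\<And>z. \<bar>deriv U z\<bar> \<le> M"
    and P: "\<And>z. (P has_real_derivative max 0 (deriv U z)) (at z)"
    and Q: "\<And>z. (Q has_real_derivative max 0 (- deriv U z)) (at z)"
begin

lemma Pmono: "a \<le> b \<Longrightarrow> P a \<le> P b" using mono_of_deriv[OF P] .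
lemma Qmono: "a \<le> b \<Longrightarrow> Q a \<le> Q b" using mono_of_deriv[OF Q] .

lemma Dd_right: "x \<le> y \<Longrightarrow> Dd P Q x y = P y - P x"
  unfolding Dd_def using Pmono[of x y] Qmono[of x y] by simp

lemma Dd_left: "y \<le> x \<Longrightarrow> Dd P Q x y = Q x - Q y"
  unfolding Dd_def using Pmono[of y x] Qmono[of y x] by simp

lemma Dd_nonneg: "0 \<le> Dd P Q x y"
  unfolding Dd_def using Pmono[of x y] Qmono[of y x] by (cases "x \<le> y") auto

lemma barrier_val:
  assumes fx: "deriv U x = 0"
  shows "barrier U y x = Dd P Q x y"
proof -
  define S where "S = {(T, \<gamma>, g). T \<ge> 0 \<and> ac_path T \<gamma> g \<and> \<gamma> 0 = x \<and> \<gamma> T = y}"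
  define I where "I = (INF p \<in> S. action U (fst p) (fst (snd p)) (snd (snd p)))"
  have bI: "barrier U y x = enn2real I" unfolding barrier_def I_def S_def ..
  have lo: "ennreal (Dd P Q x y) \<le> I"
    unfolding I_def
  proof (rule INF_greatest)
    fix p assume "p \<in> S"
    then obtain T \<gamma> g where p: "p = (T, \<gamma>, g)" "T \<ge> 0" "ac_path T \<gamma> g" "\<gamma> 0 = x" "\<gamma> T = y"
      unfolding S_def by auto
    show "ennreal (Dd P Q x y) \<le> action U (fst p) (fst (snd p)) (snd (snd p))"
      using action_lower[OF p(2,3) cf P Q] p unfolding Dd_def by simp
  qed
  have up: "I \<le> ennreal (Dd P Q x y + e)" if e: "e > 0" for e
  proof -
    define \<delta> where "\<delta> = e / (\<bar>y - x\<bar> + 1)"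
    have d: "\<delta> > 0" unfolding \<delta>_def using e by simp
    have de: "\<delta> * \<bar>y - x\<bar> \<le> e"
    proof -
      have "\<delta> * \<bar>y - x\<bar> \<le> \<delta> * (\<bar>y - x\<bar> + 1)" using d by simp
      also have "\<dots> = e" unfolding \<delta>_def by simp
      finally show ?thesis .
    qed
    show ?thesis
    proof (cases "x \<le> y")
      case True
      obtain T1 where T1: "T1 \<ge> 0" and H: "\<forall>T\<ge>T1. \<exists>\<gamma> g. ac_path T \<gamma> g \<and> \<gamma> 0 = x \<and> \<gamma> T = y \<and>
            (\<forall>t\<in>{0..T}. (g t + deriv U (\<gamma> t))^2 \<le> 4 * g t * (max 0 (deriv U (\<gamma> t)) + \<delta>))"
        using ub_right[OF cf bnd fx True d] by blast
      obtain \<gamma> g where pth: "ac_path T1 \<gamma> g" "\<gamma> 0 = x" "\<gamma> T1 = y"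
        "\<forall>t\<in>{0..T1}. (g t + deriv U (\<gamma> t))^2 \<le> 4 * g t * (max 0 (deriv U (\<gamma> t)) + \<delta>)"
        using H by blast
      have "(T1, \<gamma>, g) \<in> S" unfolding S_def using T1 pth by auto
      then have "I \<le> action U (fst (T1, \<gamma>, g)) (fst (snd (T1, \<gamma>, g))) (snd (snd (T1, \<gamma>, g)))"
        unfolding I_def by (rule INF_lower)
      then have "I \<le> action U T1 \<gamma> g" by simp
      also have "\<dots> \<le> ennreal (P y - P x + \<delta> * (y - x))"
        using ub_cost_right[OF T1 pth(1) cf P pth(4)] pth(2,3) by simp
      also have "\<dots> \<le> ennreal (Dd P Q x y + e)"
        using de True Dd_right[OF True] by (intro ennreal_leI) simp
      finally show ?thesis .
    next
      case False
      then have yx: "y \<le> x" by simp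
      obtain T1 where T1: "T1 \<ge> 0" and H: "\<forall>T\<ge>T1. \<exists>\<gamma> g. ac_path T \<gamma> g \<and> \<gamma> 0 = x \<and> \<gamma> T = y \<and>
            (\<forall>t\<in>{0..T}. (g t + deriv U (\<gamma> t))^2 \<le> 4 * (- g t) * (max 0 (- deriv U (\<gamma> t)) + \<delta>))"
        using ub_left[OF cf bnd fx yx d] by blast
      obtain \<gamma> g where pth: "ac_path T1 \<gamma> g" "\<gamma> 0 = x" "\<gamma> T1 = y"
        "\<forall>t\<in>{0..T1}. (g t + deriv U (\<gamma> t))^2 \<le> 4 * (- g t) * (max 0 (- deriv U (\<gamma> t)) + \<delta>)"
        using H by blast
      have "(T1, \<gamma>, g) \<in> S" unfolding S_def using T1 pth by auto
      then have "I \<le> action U (fst (T1, \<gamma>, g)) (fst (snd (T1, \<gamma>, g))) (snd (snd (T1, \<gamma>, g)))"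
        unfolding I_def by (rule INF_lower)
      then have "I \<le> action U T1 \<gamma> g" by simp
      also have "\<dots> \<le> ennreal (Q x - Q y + \<delta> * (x - y))"
        using ub_cost_left[OF T1 pth(1) cf Q pth(4)] pth(2,3) by simp
      also have "\<dots> \<le> ennreal (Dd P Q x y + e)"
        using de yx Dd_left[OF yx] by (intro ennreal_leI) simp
      finally show ?thesis .
    qed
  qed
  show ?thesis unfolding bI by (rule enn2real_squeeze[OF Dd_nonneg lo up])
qed

lemma path_cost_bound:
  assumes fx: "deriv U x = 0" and d: "\<delta> > 0"
  shows "\<exists>T1. \<forall>T\<ge>T1. T \<ge> 0 \<and> (\<exists>\<gamma> g. ac_path T \<gamma> g \<and> \<gamma> 0 = x \<and> \<gamma> T = z \<and>
            action U T \<gamma> g \<le> ennreal (Dd P Q x z + \<delta> * \<bar>z - x\<bar>))"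
proof (cases "x \<le> z")
  case True
  obtain T1 where T1: "T1 \<ge> 0" and H: "\<forall>T\<ge>T1. \<exists>\<gamma> g. ac_path T \<gamma> g \<and> \<gamma> 0 = x \<and> \<gamma> T = z \<and>
        (\<forall>t\<in>{0..T}. (g t + deriv U (\<gamma> t))^2 \<le> 4 * g t * (max 0 (deriv U (\<gamma> t)) + \<delta>))"
    using ub_right[OF cf bnd fx True d] by blast
  show ?thesis
  proof (intro exI[of _ T1] allI impI conjI)
    fix T assume T: "T1 \<le> T"
    then show T0: "0 \<le> T" using T1 by simp
    obtain \<gamma> g where pth: "ac_path T \<gamma> g" "\<gamma> 0 = x" "\<gamma> T = z"
      "\<forall>t\<in>{0..T}. (g t + deriv U (\<gamma> t))^2 \<le> 4 * g t * (max 0 (deriv U (\<gamma> t)) + \<delta>)"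
      using H T by blast
    have "action U T \<gamma> g \<le> ennreal (P z - P x + \<delta> * (z - x))"
      using ub_cost_right[OF T0 pth(1) cf P pth(4)] pth(2,3) by simp
    also have "\<dots> = ennreal (Dd P Q x z + \<delta> * \<bar>z - x\<bar>)"
      using True Dd_right[OF True] by simp
    finally show "\<exists>\<gamma> g. ac_path T \<gamma> g \<and> \<gamma> 0 = x \<and> \<gamma> T = z \<and>
            action U T \<gamma> g \<le> ennreal (Dd P Q x z + \<delta> * \<bar>z - x\<bar>)"
      using pth by blast
  qed
next
  case False
  then have zx: "z \<le> x" by simp
  obtain T1 where T1: "T1 \<ge> 0" and H: "\<forall>T\<ge>T1. \<exists>\<gamma> g. ac_path T \<gamma> g \<and> \<gamma> 0 = x \<and> \<gamma> T = z \<and>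
        (\<forall>t\<in>{0..T}. (g t + deriv U (\<gamma> t))^2 \<le> 4 * (- g t) * (max 0 (- deriv U (\<gamma> t)) + \<delta>))"
    using ub_left[OF cf bnd fx zx d] by blast
  show ?thesis
  proof (intro exI[of _ T1] allI impI conjI)
    fix T assume T: "T1 \<le> T"
    then show T0: "0 \<le> T" using T1 by simp
    obtain \<gamma> g where pth: "ac_path T \<gamma> g" "\<gamma> 0 = x" "\<gamma> T = z"
      "\<forall>t\<in>{0..T}. (g t + deriv U (\<gamma> t))^2 \<le> 4 * (- g t) * (max 0 (- deriv U (\<gamma> t)) + \<delta>)"
      using H T by blast
    have "action U T \<gamma> g \<le> ennreal (Q x - Q z + \<delta> * (x - z))"
      using ub_cost_left[OF T0 pth(1) cf Q pth(4)] pth(2,3) by simp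
    also have "\<dots> = ennreal (Dd P Q x z + \<delta> * \<bar>z - x\<bar>)"
      using zx Dd_left[OF zx] by simp
    finally show "\<exists>\<gamma> g. ac_path T \<gamma> g \<and> \<gamma> 0 = x \<and> \<gamma> T = z \<and>
            action U T \<gamma> g \<le> ennreal (Dd P Q x z + \<delta> * \<bar>z - x\<bar>)"
      using pth by blast
  qed
qed

lemma small_delta:
  fixes e c :: real
  assumes "e > 0"
  shows "e / (\<bar>c\<bar> + 1) > 0" "e / (\<bar>c\<bar> + 1) * \<bar>c\<bar> \<le> e"
proof -
  show "e / (\<bar>c\<bar> + 1) > 0" using assms by simp
  have "e / (\<bar>c\<bar> + 1) * \<bar>c\<bar> \<le> e / (\<bar>c\<bar> + 1) * (\<bar>c\<bar> + 1)"
    using assms by (intro mult_left_mono) auto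
  also have "\<dots> = e" by simp
  finally show "e / (\<bar>c\<bar> + 1) * \<bar>c\<bar> \<le> e" .
qed

lemma peierls_val:
  assumes fx: "deriv U x = 0"
  shows "peierls U y x = Inf (range (\<lambda>m::int. Dd P Q x (y + of_int m)))"
proof -
  define h where "h = Inf (range (\<lambda>m::int. Dd P Q x (y + of_int m)))"
  have bdd: "bdd_below (range (\<lambda>m::int. Dd P Q x (y + of_int m)))"
    using Dd_nonneg by (intro bdd_belowI[of _ 0]) auto
  have hle: "h \<le> Dd P Q x (y + of_int m)" for m
    unfolding h_def by (rule cInf_lower[OF _ bdd]) simp
  have h0: "0 \<le> h" unfolding h_def by (rule cInf_greatest) (auto intro: Dd_nonneg)
  define S where "S T = {(\<gamma>, g). ac_path T \<gamma> g \<and> \<gamma> 0 = x \<and> (\<exists>m::int. \<gamma> T = y + of_int m)}" for T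
  define I where "I T = (INF p \<in> S T. action U T (fst p) (snd p))" for T
  have pI: "peierls U y x = enn2real (Liminf at_top I)"
    unfolding peierls_def I_def S_def ..
  have lo: "ennreal h \<le> Liminf at_top I"
  proof (rule Liminf_bounded)
    show "\<forall>\<^sub>F T in at_top. ennreal h \<le> I T"
      using eventually_ge_at_top[of 0]
    proof (rule eventually_mono)
      fix T :: real assume T: "0 \<le> T"
      show "ennreal h \<le> I T" unfolding I_def
      proof (rule INF_greatest)
        fix p assume "p \<in> S T"
        then obtain \<gamma> g m where p: "p = (\<gamma>, g)" "ac_path T \<gamma> g" "\<gamma> 0 = x" "\<gamma> T = y + of_int m"
          unfolding S_def by auto
        have "ennreal (Dd P Q x (\<gamma> T)) \<le> action U T \<gamma> g"
          using action_lower[OF T p(2) cf P Q] p(3) unfolding Dd_def by simp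
        moreover have "ennreal h \<le> ennreal (Dd P Q x (\<gamma> T))"
          using hle[of m] p(4) by (intro ennreal_leI) simp
        ultimately show "ennreal h \<le> action U T (fst p) (snd p)" using p(1) by simp
      qed
    qed
  qed
  have up: "Liminf at_top I \<le> ennreal (h + e)" if e: "e > 0" for e
  proof -
    have "h < h + e / 2" using e by simp
    then have "\<exists>v\<in>range (\<lambda>m::int. Dd P Q x (y + of_int m)). v < h + e / 2"
      unfolding h_def by (intro cInf_lessD) auto
    then obtain m where m: "Dd P Q x (y + of_int m) < h + e / 2" by auto
    define z where "z = y + of_int m"
    define \<delta> where "\<delta> = (e / 2) / (\<bar>z - x\<bar> + 1)"
    have d: "\<delta> > 0" and de: "\<delta> * \<bar>z - x\<bar> \<le> e / 2"
      unfolding \<delta>_def using small_delta[of "e/2" "z - x"] e by auto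
    obtain T1 where T1: "\<forall>T\<ge>T1. T \<ge> 0 \<and> (\<exists>\<gamma> g. ac_path T \<gamma> g \<and> \<gamma> 0 = x \<and> \<gamma> T = z \<and>
            action U T \<gamma> g \<le> ennreal (Dd P Q x z + \<delta> * \<bar>z - x\<bar>))"
      using path_cost_bound[OF fx d, of z] by blast
    have ev: "\<forall>\<^sub>F T in at_top. I T \<le> ennreal (h + e)"
      using eventually_ge_at_top[of T1]
    proof (rule eventually_mono)
      fix T assume T: "T1 \<le> T"
      obtain \<gamma> g where pth: "ac_path T \<gamma> g" "\<gamma> 0 = x" "\<gamma> T = z"
        "action U T \<gamma> g \<le> ennreal (Dd P Q x z + \<delta> * \<bar>z - x\<bar>)"
        using T1 T by blast
      have "(\<gamma>, g) \<in> S T" unfolding S_def using pth unfolding z_def by auto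
      then have "I T \<le> action U T (fst (\<gamma>, g)) (snd (\<gamma>, g))"
        unfolding I_def by (rule INF_lower)
      also have "\<dots> \<le> ennreal (Dd P Q x z + \<delta> * \<bar>z - x\<bar>)" using pth(4) by simp
      also have "\<dots> \<le> ennreal (h + e)"
        using m de unfolding z_def by (intro ennreal_leI) simp
      finally show "I T \<le> ennreal (h + e)" .
    qed
    have "Liminf at_top I \<le> Limsup at_top I" by (rule Liminf_le_Limsup) simp
    also have "\<dots> \<le> ennreal (h + e)" by (rule Limsup_bounded[OF ev])
    finally show ?thesis .
  qed
  show ?thesis unfolding pI h_def[symmetric] by (rule enn2real_squeeze[OF h0 lo up])
qed

end


lemma const_on_interval:
  fixes H :: "real \<Rightarrow> real"
  assumes "a \<le> b" and d: "\<And>z. z \<in> {a..b} \<Longrightarrow> (H has_real_derivative 0) (at z)" and z: "z \<in> {a..b}"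
  shows "H z = H a"
proof (cases "a = b")
  case True then show ?thesis using z by simp
next
  case False
  then have ab: "a < b" using assms(1) by simp
  have "continuous_on {a..b} H"
    using d by (intro continuous_at_imp_continuous_on ballI DERIV_isCont) auto
  then show ?thesis using DERIV_isconst2[OF ab _ _, of H z] d z by auto
qed

lemma int_shift_nat:
  fixes F :: "real \<Rightarrow> real"
  assumes "\<And>z. F (z + 1) = F z + c"
  shows "F (z + real n) = F z + real n * c" "F (z - real n) = F z - real n * c"
proof -
  show "F (z + real n) = F z + real n * c"
  proof (induction n)
    case (Suc n)
    have "F (z + real (Suc n)) = F ((z + real n) + 1)" by (simp add: algebra_simps)
    also have "\<dots> = F (z + real n) + c" by (rule assms)
    finally show ?case using Suc by (simp add: algebra_simps)
  qed simp
  show "F (z - real n) = F z - real n * c"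
  proof (induction n)
    case (Suc n)
    have "F (z - real (Suc n)) + c = F (z - real n)" using assms[of "z - real (Suc n)"] by simp
    then show ?case using Suc by (simp add: algebra_simps)
  qed simp
qed

lemma int_shift:
  fixes F :: "real \<Rightarrow> real"
  assumes "\<And>z. F (z + 1) = F z + c"
  shows "F (z + of_int m) = F z + of_int m * c"
proof (cases "m \<ge> 0")
  case True
  then obtain n where "m = int n" using nonneg_int_cases by blast
  then show ?thesis using int_shift_nat(1)[where F=F and c=c, OF assms] by simp
next
  case False
  then obtain n where "m = - int n" by (intro that[of "nat (- m)"]) simp
  then show ?thesis using int_shift_nat(2)[where F=F and c=c and z=z and n=n, OF assms] by simp
qed

lemma int_seq_shift:
  fixes F :: "int \<Rightarrow> real" and k :: int
  assumes "\<And>i. F (i + k) = F i + 1"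
  shows "F (i + m * k) = F i + of_int m"
proof -
  have pos: "F (i + int n * k) = F i + of_int n" for i n
  proof (induction n arbitrary: i)
    case (Suc n)
    have "F (i + int (Suc n) * k) = F ((i + int n * k) + k)" by (simp add: algebra_simps)
    also have "\<dots> = F i + of_int (int (Suc n))" using assms[of "i + int n * k"] Suc by simp
    finally show ?case .
  qed simp
  show ?thesis
  proof (cases "m \<ge> 0")
    case True
    then obtain n where "m = int n" using nonneg_int_cases by blast
    then show ?thesis using pos by simp
  next
    case False
    then obtain n where n: "m = - int n" by (intro that[of "nat (- m)"]) simp
    have "F ((i + m * k) + int n * k) = F (i + m * k) + of_int n" by (rule pos)
    then show ?thesis using n by simp
  qed
qed


locale setting =
  fixes U Ut :: "real \<Rightarrow> real" and b :: real and k :: int and xm xM :: "int \<Rightarrow> real"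
  assumes smoothU: "smooth_fun U"
    and skew: "\<forall>x. U x = Ut x - b * x" and per: "\<forall>x. Ut (x + 1) = Ut x"
    and k1: "k \<ge> 1"
    and xm_per: "\<forall>i. xm (i + k) = xm i + 1"
    and xM_per: "\<forall>i. xM (i + k) = xM i + 1"
    and xM0: "xM 0 = 0" and xMk: "xM k = 1"
    and order: "\<forall>i\<in>{1..k}. xM (i - 1) < xm i \<and> xm i < xM i"
    and mins: "\<forall>i\<in>{1..k}. loc_min U (xm i)"
    and crit: "{x\<in>{0..<1}. deriv U x = 0} = xm ` {1..k} \<union> xM ` {0..<k}"
begin

lemma U_deriv: "(U has_real_derivative deriv U x) (at x)"
proof -
  have "((deriv ^^ 0) U) differentiable (at x)" using smoothU unfolding smooth_fun_def by blast
  then show ?thesis by (simp add: DERIV_deriv_iff_real_differentiable)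
qed

lemma cf: "continuous_on UNIV (deriv U)"
proof -
  have "((deriv ^^ 1) U) differentiable (at x)" for x using smoothU unfolding smooth_fun_def by blast
  then have "isCont (deriv U) x" for x by (simp add: differentiable_imp_continuous_within)
  then show ?thesis by (intro continuous_at_imp_continuous_on) auto
qed

lemma U_shift: "U (z + 1) = U z - b"
proof -
  have "U (z + 1) = Ut (z + 1) - b * (z + 1)" using skew by blast
  also have "\<dots> = Ut z - b * z - b" using per[rule_format, of z] by (simp add: algebra_simps)
  also have "\<dots> = U z - b" using skew by simp
  finally show ?thesis .
qed

lemma f_per1: "deriv U (z + 1) = deriv U z"
proof -
  have "((\<lambda>z. U (z + 1)) has_real_derivative deriv U (z + 1) * 1) (at z)"
    by (rule DERIV_chain2[OF U_deriv]) (auto intro!: derivative_eq_intros)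
  moreover have "((\<lambda>z. U (z + 1)) has_real_derivative deriv U z) (at z)"
  proof -
    have "((\<lambda>z. U z - b) has_real_derivative deriv U z) (at z)" using U_deriv by (auto intro!: derivative_eq_intros)
    then show ?thesis using U_shift by simp
  qed
  ultimately show ?thesis using DERIV_unique by fastforce
qed

lemma f_per: "deriv U (z + of_int m) = deriv U z"
proof -
  have "deriv U (z + 1) = deriv U z + 0" for z using f_per1 by simp
  from int_shift[where F="deriv U" and c=0, OF this] show ?thesis by simp
qed

lemma f_bounded: "\<exists>M. \<forall>z. \<bar>deriv U z\<bar> \<le> M"
proof -
  obtain M where M0: "\<forall>v\<in>deriv U ` {0..1}. norm v \<le> M"
    using compact_imp_bounded[OF compact_continuous_image[OF continuous_on_subset[OF cf] compact_Icc]]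
    unfolding bounded_iff by blast
  have "\<bar>deriv U z\<bar> \<le> M" for z
  proof -
    have "deriv U z = deriv U ((z - of_int \<lfloor>z\<rfloor>) + of_int \<lfloor>z\<rfloor>)" by simp
    also have "\<dots> = deriv U (z - of_int \<lfloor>z\<rfloor>)" by (rule f_per)
    finally have e: "deriv U z = deriv U (z - of_int \<lfloor>z\<rfloor>)" .
    have "z - of_int \<lfloor>z\<rfloor> < 1" by linarith
    then have "z - of_int \<lfloor>z\<rfloor> \<in> {0..1}" by auto
    then show ?thesis using M0 e by auto
  qed
  then show ?thesis by blast
qed

definition "MM = (SOME M. \<forall>z. \<bar>deriv U z\<bar> \<le> M)"
definition "PP = (SOME H. \<forall>z. (H has_real_derivative max 0 (deriv U z)) (at z))"
definition "QQ = (SOME H. \<forall>z. (H has_real_derivative max 0 (- deriv U z)) (at z))"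

lemma MM: "\<bar>deriv U z\<bar> \<le> MM"
  using someI_ex[OF f_bounded] unfolding MM_def by blast

lemma PP: "(PP has_real_derivative max 0 (deriv U z)) (at z)"
proof -
  have "\<exists>H. \<forall>z. (H has_real_derivative max 0 (deriv U z)) (at z)"
    by (rule antideriv_exists) (intro continuous_intros cf)
  from someI_ex[OF this] show ?thesis unfolding PP_def by blast
qed

lemma QQ: "(QQ has_real_derivative max 0 (- deriv U z)) (at z)"
proof -
  have "\<exists>H. \<forall>z. (H has_real_derivative max 0 (- deriv U z)) (at z)"
    by (rule antideriv_exists) (intro continuous_intros cf)
  from someI_ex[OF this] show ?thesis unfolding QQ_def by blast
qed

sublocale pot U PP QQ MM
  by unfold_locales (use cf MM PP QQ in auto)

end


context setting begin

lemma xm_shift: "xm (i + m * k) = xm i + of_int m"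
  by (rule int_seq_shift) (use xm_per in auto)

lemma xM_shift: "xM (i + m * k) = xM i + of_int m"
  by (rule int_seq_shift) (use xM_per in auto)

lemma decomp: obtains i m where "i \<in> {1..k}" "l = i + m * k"
proof -
  have kp: "k > 0" using k1 by simp
  define i where "i = (l - 1) mod k + 1"
  define m where "m = (l - 1) div k"
  have "i \<in> {1..k}" unfolding i_def using kp pos_mod_bound[OF kp, of "l - 1"] pos_mod_sign[OF kp, of "l - 1"] by auto
  moreover have "l = i + m * k" unfolding i_def m_def using div_mult_mod_eq[of "l - 1" k] by (simp add: algebra_simps)
  ultimately show ?thesis using that by blast
qed

lemma decomp0: obtains i m where "i \<in> {0..<k}" "l = i + m * k"
proof -
  have kp: "k > 0" using k1 by simp
  define i where "i = l mod k"
  define m where "m = l div k"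
  have "i \<in> {0..<k}" unfolding i_def using kp pos_mod_bound[OF kp, of l] pos_mod_sign[OF kp, of l] by auto
  moreover have "l = i + m * k" unfolding i_def m_def using div_mult_mod_eq[of l k] by (simp add: algebra_simps)
  ultimately show ?thesis using that by blast
qed

lemma order_all: "xM (l - 1) < xm l \<and> xm l < xM l"
proof -
  obtain i m where i: "i \<in> {1..k}" and l: "l = i + m * k" by (rule decomp)
  have "xM (i - 1) < xm i \<and> xm i < xM i" using order i by blast
  moreover have "xM (l - 1) = xM (i - 1) + of_int m" unfolding l using xM_shift[of "i - 1" m] by (simp add: algebra_simps)
  moreover have "xm l = xm i + of_int m" unfolding l by (rule xm_shift)
  moreover have "xM l = xM i + of_int m" unfolding l by (rule xM_shift)
  ultimately show ?thesis by simp
qed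

lemma xm_lt_xM: "xm l < xM l" using order_all by blast
lemma xM_lt_xm: "xM l < xm (l + 1)" using order_all[of "l + 1"] by simp

lemma xm_step: "xm l < xm (l + 1)" using xm_lt_xM[of l] xM_lt_xm[of l] by linarith
lemma xM_step: "xM l < xM (l + 1)" using xm_lt_xM[of "l + 1"] xM_lt_xm[of l] by linarith

lemma strict_from_step:
  fixes F :: "int \<Rightarrow> real"
  assumes st: "\<And>l. F l < F (l + 1)" and ab: "p < q"
  shows "F p < F q"
proof -
  have "F p < F (p + int (Suc d))" for d
  proof (induction d)
    case 0 then show ?case using st[of p] by simp
  next
    case (Suc d)
    have "F (p + int (Suc d)) < F (p + int (Suc d) + 1)" by (rule st)
    then show ?case using Suc by (simp add: add.assoc)
  qed
  moreover have "q = p + int (Suc (nat (q - p - 1)))" using ab by simp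
  ultimately show ?thesis by metis
qed

lemma xm_less: "p < q \<Longrightarrow> xm p < xm q" using strict_from_step[where F=xm, OF xm_step] .
lemma xM_less: "p < q \<Longrightarrow> xM p < xM q" using strict_from_step[where F=xM, OF xM_step] .
lemma xm_le: "p \<le> q \<Longrightarrow> xm p \<le> xm q" using xm_less[of p q] by (cases "p = q") auto
lemma xM_le: "p \<le> q \<Longrightarrow> xM p \<le> xM q" using xM_less[of p q] by (cases "p = q") auto
lemma xm_less_iff: "xm p < xm q \<longleftrightarrow> p < q"
  using xm_less[of p q] xm_le[of q p] by (cases "p < q") auto
lemma xm_le_iff: "xm p \<le> xm q \<longleftrightarrow> p \<le> q"
  using xm_less[of q p] xm_le[of p q] by (cases "p \<le> q") auto
lemma xM_less_iff: "xM p < xM q \<longleftrightarrow> p < q"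
  using xM_less[of p q] xM_le[of q p] by (cases "p < q") auto
lemma xM_le_iff: "xM p \<le> xM q \<longleftrightarrow> p \<le> q"
  using xM_less[of q p] xM_le[of p q] by (cases "p \<le> q") auto

lemma xm_lt_xM_iff: "xm p < xM q \<longleftrightarrow> p \<le> q"
proof
  assume "xm p < xM q"
  show "p \<le> q"
  proof (rule ccontr)
    assume "\<not> p \<le> q" then have "q + 1 \<le> p" by simp
    then have "xm (q + 1) \<le> xm p" by (rule xm_le)
    then show False using xM_lt_xm[of q] \<open>xm p < xM q\<close> by linarith
  qed
next
  assume "p \<le> q" then show "xm p < xM q" using xm_le[of p q] xm_lt_xM[of q] by linarith
qed

lemma xM_lt_xm_iff: "xM p < xm q \<longleftrightarrow> p < q"
proof
  assume h: "xM p < xm q"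
  show "p < q"
  proof (rule ccontr)
    assume "\<not> p < q" then have "q \<le> p" by simp
    then have "xm q < xM p" using xm_lt_xM_iff by simp
    then show False using h by linarith
  qed
next
  assume "p < q" then have "p + 1 \<le> q" by simp
  then show "xM p < xm q" using xm_le[of "p + 1" q] xM_lt_xm[of p] by linarith
qed

lemma crit_xm: "deriv U (xm l) = 0"
proof -
  obtain i m where i: "i \<in> {1..k}" and l: "l = i + m * k" by (rule decomp)
  have oi: "xM (i - 1) < xm i" "xm i < xM i" using order i by auto
  have "xM 0 \<le> xM (i - 1)" using i by (intro xM_le) auto
  then have xm0: "0 \<le> xm i" using oi xM0 by linarith
  have "xM i \<le> xM k" using i by (intro xM_le) auto
  then have xm1: "xm i < 1" using oi xMk by linarith
  have "xm i \<in> xm ` {1..k} \<union> xM ` {0..<k}" using i by blast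
  then have "xm i \<in> {x\<in>{0..<1}. deriv U x = 0}" by (simp only: crit)
  then have "deriv U (xm i) = 0" by simp
  then show ?thesis unfolding l xm_shift using f_per by simp
qed

lemma crit_xM: "deriv U (xM l) = 0"
proof -
  obtain i m where i: "i \<in> {0..<k}" and l: "l = i + m * k" by (rule decomp0)
  have "xM i \<in> xm ` {1..k} \<union> xM ` {0..<k}" using i by blast
  then have "xM i \<in> {x\<in>{0..<1}. deriv U x = 0}" by (simp only: crit)
  then have "deriv U (xM i) = 0" by simp
  then show ?thesis unfolding l xM_shift using f_per by simp
qed

lemma noncrit:
  assumes z01: "0 \<le> z" "z < 1" and ne: "\<And>j. z \<noteq> xm j" "\<And>j. z \<noteq> xM j"
  shows "deriv U z \<noteq> 0"
proof
  assume "deriv U z = 0"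
  then have "z \<in> {x\<in>{0..<1}. deriv U x = 0}" using z01 by simp
  then have "z \<in> xm ` {1..k} \<union> xM ` {0..<k}" by (simp only: crit)
  then show False using ne by blast
qed

end


context setting begin

lemma xm_pos: "i \<in> {1..k} \<Longrightarrow> 0 \<le> xM (i - 1) \<and> xM i \<le> 1"
proof -
  assume i: "i \<in> {1..k}"
  have "xM 0 \<le> xM (i - 1)" using i by (intro xM_le) auto
  moreover have "xM i \<le> xM k" using i by (intro xM_le) auto
  ultimately show ?thesis using xM0 xMk by simp
qed

lemma sign_right_base:
  assumes i: "i \<in> {1..k}" and z: "z \<in> {xm i<..<xM i}"
  shows "deriv U z > 0"
proof -
  have ne: "deriv U w \<noteq> 0" if w: "w \<in> {xm i<..<xM i}" for w
  proof (rule noncrit)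
    have "0 \<le> xM (i - 1)" "xM i \<le> 1" using xm_pos[OF i] by auto
    then show "0 \<le> w" "w < 1" using w order_all[of i] by auto
    fix j
    show "w \<noteq> xm j"
    proof
      assume "w = xm j"
      then have "xm i < xm j" "xm j < xM i" using w by auto
      then show False unfolding xm_less_iff xm_lt_xM_iff by simp
    qed
    show "w \<noteq> xM j"
    proof
      assume "w = xM j"
      then have "xm i < xM j" "xM j < xM i" using w by auto
      then show False unfolding xM_less_iff xm_lt_xM_iff by simp
    qed
  qed
  show ?thesis
  proof (rule ccontr)
    assume "\<not> deriv U z > 0"
    then have fz: "deriv U z < 0" using ne[OF z] by linarith
    have neg: "deriv U w < 0" if w: "w \<in> {xm i<..z}" for w
    proof (rule ccontr)
      assume "\<not> deriv U w < 0"
      then have fw: "deriv U w \<ge> 0" by simp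
      have cont: "\<forall>c. w \<le> c \<and> c \<le> z \<longrightarrow> isCont (deriv U) c"
        using cf by (simp add: continuous_on_eq_continuous_at)
      obtain c where c: "w \<le> c" "c \<le> z" "deriv U c = 0"
        using IVT2[of "deriv U" z 0 w] fz fw w cont by auto
      then have "c \<in> {xm i<..<xM i}" using w z by auto
      then show False using ne c(3) by blast
    qed
    obtain e where e: "e > 0" and em: "\<And>y. \<bar>y - xm i\<bar> < e \<Longrightarrow> U (xm i) \<le> U y"
      using mins i unfolding loc_min_def by blast
    define w where "w = min z (xm i + e / 2)"
    have w: "xm i < w" "w \<le> z" "\<bar>w - xm i\<bar> < e" unfolding w_def using z e by auto
    obtain \<xi> where \<xi>: "xm i < \<xi>" "\<xi> < w" "U w - U (xm i) = (w - xm i) * deriv U \<xi>"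
      using MVT2[OF w(1), of U "deriv U"] U_deriv by blast
    have "deriv U \<xi> < 0" using neg[of \<xi>] \<xi> w by auto
    then have "(w - xm i) * deriv U \<xi> < 0" using w(1) by (simp add: mult_pos_neg)
    then have "U w < U (xm i)" using \<xi>(3) by simp
    then show False using em[OF w(3)] by simp
  qed
qed

lemma sign_left_base:
  assumes i: "i \<in> {1..k}" and z: "z \<in> {xM (i - 1)<..<xm i}"
  shows "deriv U z < 0"
proof -
  have ne: "deriv U w \<noteq> 0" if w: "w \<in> {xM (i - 1)<..<xm i}" for w
  proof (rule noncrit)
    have "0 \<le> xM (i - 1)" "xM i \<le> 1" using xm_pos[OF i] by auto
    then show "0 \<le> w" "w < 1" using w order_all[of i] by auto
    fix j
    show "w \<noteq> xm j"
    proof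
      assume "w = xm j"
      then have "xM (i - 1) < xm j" "xm j < xm i" using w by auto
      then show False unfolding xm_less_iff xM_lt_xm_iff by simp
    qed
    show "w \<noteq> xM j"
    proof
      assume "w = xM j"
      then have "xM (i - 1) < xM j" "xM j < xm i" using w by auto
      then show False unfolding xM_less_iff xM_lt_xm_iff by simp
    qed
  qed
  show ?thesis
  proof (rule ccontr)
    assume "\<not> deriv U z < 0"
    then have fz: "deriv U z > 0" using ne[OF z] by linarith
    have pos: "deriv U w > 0" if w: "w \<in> {z..<xm i}" for w
    proof (rule ccontr)
      assume "\<not> deriv U w > 0"
      then have fw: "deriv U w \<le> 0" by simp
      have cont: "\<forall>c. z \<le> c \<and> c \<le> w \<longrightarrow> isCont (deriv U) c"
        using cf by (simp add: continuous_on_eq_continuous_at)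
      obtain c where c: "z \<le> c" "c \<le> w" "deriv U c = 0"
        using IVT2[of "deriv U" w 0 z] fz fw w cont by auto
      then have "c \<in> {xM (i - 1)<..<xm i}" using w z by auto
      then show False using ne c(3) by blast
    qed
    obtain e where e: "e > 0" and em: "\<And>y. \<bar>y - xm i\<bar> < e \<Longrightarrow> U (xm i) \<le> U y"
      using mins i unfolding loc_min_def by blast
    define w where "w = max z (xm i - e / 2)"
    have w: "w < xm i" "z \<le> w" "\<bar>w - xm i\<bar> < e" unfolding w_def using z e by auto
    obtain \<xi> where \<xi>: "w < \<xi>" "\<xi> < xm i" "U (xm i) - U w = (xm i - w) * deriv U \<xi>"
      using MVT2[OF w(1), of U "deriv U"] U_deriv by blast
    have "deriv U \<xi> > 0" using pos[of \<xi>] \<xi> w by auto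
    then have "(xm i - w) * deriv U \<xi> > 0" using w(1) by simp
    then have "U w < U (xm i)" using \<xi>(3) by simp
    then show False using em[OF w(3)] by simp
  qed
qed

lemma sign_right:
  assumes z: "z \<in> {xm l<..<xM l}"
  shows "deriv U z > 0"
proof -
  obtain i m where i: "i \<in> {1..k}" and l: "l = i + m * k" by (rule decomp)
  have "z - of_int m \<in> {xm i<..<xM i}" using z unfolding l xm_shift xM_shift by auto
  then have "deriv U (z - of_int m) > 0" by (rule sign_right_base[OF i])
  moreover have "deriv U (z - of_int m) = deriv U z" using f_per[of z "- m"] by simp
  ultimately show ?thesis by simp
qed

lemma sign_left:
  assumes z: "z \<in> {xM (l - 1)<..<xm l}"
  shows "deriv U z < 0"
proof -
  obtain i m where i: "i \<in> {1..k}" and l: "l = i + m * k" by (rule decomp)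
  have e: "l - 1 = (i - 1) + m * k" using l by simp
  have "xM (l - 1) = xM (i - 1) + of_int m" unfolding e by (rule xM_shift)
  moreover have "xm l = xm i + of_int m" unfolding l by (rule xm_shift)
  ultimately have "z - of_int m \<in> {xM (i - 1)<..<xm i}" using z by auto
  then have "deriv U (z - of_int m) < 0" by (rule sign_left_base[OF i])
  moreover have "deriv U (z - of_int m) = deriv U z" using f_per[of z "- m"] by simp
  ultimately show ?thesis by simp
qed

lemma f_nonneg: "z \<in> {xm l..xM l} \<Longrightarrow> deriv U z \<ge> 0"
  using sign_right[of z l] crit_xm[of l] crit_xM[of l] by (cases "z = xm l \<or> z = xM l") auto

lemma f_nonpos: "z \<in> {xM (l - 1)..xm l} \<Longrightarrow> deriv U z \<le> 0"
  using sign_left[of z l] crit_xm[of l] crit_xM[of "l - 1"] by (cases "z = xm l \<or> z = xM (l - 1)") auto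

lemma U_strict_right:
  assumes "p \<in> {xm l..xM l}" "q \<in> {xm l..xM l}" "p < q"
  shows "U p < U q"
proof -
  obtain \<xi> where \<xi>: "p < \<xi>" "\<xi> < q" "U q - U p = (q - p) * deriv U \<xi>"
    using MVT2[OF assms(3), of U "deriv U"] U_deriv by blast
  have "deriv U \<xi> > 0" using sign_right[of \<xi> l] \<xi> assms by auto
  then show ?thesis using \<xi>(3) assms(3) by (smt (verit) mult_pos_pos)
qed

lemma U_strict_left:
  assumes "p \<in> {xM (l - 1)..xm l}" "q \<in> {xM (l - 1)..xm l}" "p < q"
  shows "U q < U p"
proof -
  obtain \<xi> where \<xi>: "p < \<xi>" "\<xi> < q" "U q - U p = (q - p) * deriv U \<xi>"
    using MVT2[OF assms(3), of U "deriv U"] U_deriv by blast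
  have "deriv U \<xi> < 0" using sign_left[of \<xi> l] \<xi> assms by auto
  then have "(q - p) * deriv U \<xi> < 0" using assms(3) by (simp add: mult_pos_neg)
  then show ?thesis using \<xi>(3) by simp
qed

lemma Q_const_right: "z \<in> {xm l..xM l} \<Longrightarrow> QQ z = QQ (xm l)"
proof -
  assume z: "z \<in> {xm l..xM l}"
  show ?thesis
  proof (rule const_on_interval[OF _ _ z])
    show "xm l \<le> xM l" using xm_lt_xM[of l] by simp
    fix w assume "w \<in> {xm l..xM l}"
    then have "max 0 (- deriv U w) = 0" using f_nonneg[of w l] by simp
    then show "(QQ has_real_derivative 0) (at w)" using QQ[of w] by simp
  qed
qed

lemma P_U_right: "z \<in> {xm l..xM l} \<Longrightarrow> PP z - PP (xm l) = U z - U (xm l)"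
proof -
  assume z: "z \<in> {xm l..xM l}"
  have "(\<lambda>z. PP z - U z) z = (\<lambda>z. PP z - U z) (xm l)"
  proof (rule const_on_interval[OF _ _ z])
    show "xm l \<le> xM l" using xm_lt_xM[of l] by simp
    fix w assume "w \<in> {xm l..xM l}"
    then have e: "max 0 (deriv U w) = deriv U w" using f_nonneg[of w l] by simp
    show "((\<lambda>z. PP z - U z) has_real_derivative 0) (at w)"
      using DERIV_diff[OF PP[of w] U_deriv[of w]] e by simp
  qed
  then show ?thesis by simp
qed

lemma P_const_left: "z \<in> {xM (l - 1)..xm l} \<Longrightarrow> PP z = PP (xm l)"
proof -
  assume z: "z \<in> {xM (l - 1)..xm l}"
  have ab: "xM (l - 1) \<le> xm l" using order_all[of l] by simp
  have d: "(PP has_real_derivative 0) (at w)" if "w \<in> {xM (l - 1)..xm l}" for w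
  proof -
    have "max 0 (deriv U w) = 0" using f_nonpos[of w l] that by simp
    then show ?thesis using PP[of w] by simp
  qed
  have "PP z = PP (xM (l - 1))" by (rule const_on_interval[OF ab d z])
  moreover have "PP (xm l) = PP (xM (l - 1))" by (rule const_on_interval[OF ab d]) (use ab in auto)
  ultimately show ?thesis by simp
qed

lemma Q_U_left: "z \<in> {xM (l - 1)..xm l} \<Longrightarrow> QQ z - QQ (xm l) = U (xm l) - U z"
proof -
  assume z: "z \<in> {xM (l - 1)..xm l}"
  have ab: "xM (l - 1) \<le> xm l" using order_all[of l] by simp
  have d: "((\<lambda>z. QQ z + U z) has_real_derivative 0) (at w)" if "w \<in> {xM (l - 1)..xm l}" for w
  proof -
    have e: "max 0 (- deriv U w) = - deriv U w" using f_nonpos[of w l] that by simp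
    show ?thesis using DERIV_add[OF QQ[of w] U_deriv[of w]] e by simp
  qed
  have "(\<lambda>z. QQ z + U z) z = (\<lambda>z. QQ z + U z) (xM (l - 1))" by (rule const_on_interval[OF ab d z])
  moreover have "(\<lambda>z. QQ z + U z) (xm l) = (\<lambda>z. QQ z + U z) (xM (l - 1))"
    by (rule const_on_interval[OF ab d]) (use ab in auto)
  ultimately show ?thesis by simp
qed

lemma PP_per1: "PP (z + 1) = PP z + (PP 1 - PP 0)"
proof -
  have "\<forall>x. ((\<lambda>z. PP (z + 1) - PP z) has_real_derivative 0) (at x)"
  proof
    fix x
    have "((\<lambda>z. PP (z + 1)) has_real_derivative max 0 (deriv U (x + 1)) * 1) (at x)"
      by (rule DERIV_chain2[OF PP]) (auto intro!: derivative_eq_intros)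
    from DERIV_diff[OF this PP[of x]] show "((\<lambda>z. PP (z + 1) - PP z) has_real_derivative 0) (at x)"
      using f_per1[of x] by simp
  qed
  from DERIV_isconst_all[OF this, of z 0] show ?thesis by simp
qed

lemma QQ_per1: "QQ (z + 1) = QQ z + (QQ 1 - QQ 0)"
proof -
  have "\<forall>x. ((\<lambda>z. QQ (z + 1) - QQ z) has_real_derivative 0) (at x)"
  proof
    fix x
    have "((\<lambda>z. QQ (z + 1)) has_real_derivative max 0 (- deriv U (x + 1)) * 1) (at x)"
      by (rule DERIV_chain2[OF QQ]) (auto intro!: derivative_eq_intros)
    from DERIV_diff[OF this QQ[of x]] show "((\<lambda>z. QQ (z + 1) - QQ z) has_real_derivative 0) (at x)"
      using f_per1[of x] by simp
  qed
  from DERIV_isconst_all[OF this, of z 0] show ?thesis by simp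
qed

lemma Dd_shift: "Dd PP QQ (x + of_int m) (y + of_int m) = Dd PP QQ x y"
  unfolding Dd_def int_shift[where F=PP, OF PP_per1] int_shift[where F=QQ, OF QQ_per1] by simp

end


context pot begin

lemma Dd_add_right: "x \<le> y \<Longrightarrow> y \<le> z \<Longrightarrow> Dd P Q x z = Dd P Q x y + Dd P Q y z"
  using Dd_right[of x y] Dd_right[of y z] Dd_right[of x z] by simp

lemma Dd_add_left: "z \<le> y \<Longrightarrow> y \<le> x \<Longrightarrow> Dd P Q x z = Dd P Q x y + Dd P Q y z"
  using Dd_left[of z y] Dd_left[of y x] Dd_left[of z x] by simp

lemma Dd_tri: "Dd P Q x z \<le> Dd P Q x y + Dd P Q y z"
proof -
  have "P z - P x = (P y - P x) + (P z - P y)" by simp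
  moreover have "Q x - Q z = (Q x - Q y) + (Q y - Q z)" by simp
  ultimately show ?thesis unfolding Dd_def by linarith
qed

lemma Dd_self: "Dd P Q x x = 0" unfolding Dd_def by simp

end

lemma int_seq_shift_c:
  fixes F :: "int \<Rightarrow> real" and k :: int
  assumes "\<And>i. F (i + k) = F i"
  shows "F (i + m * k) = F i"
proof -
  have pos: "F (i + int n * k) = F i" for i n
  proof (induction n arbitrary: i)
    case (Suc n)
    have "F (i + int (Suc n) * k) = F ((i + int n * k) + k)" by (simp add: algebra_simps)
    also have "\<dots> = F i" using assms[of "i + int n * k"] Suc by simp
    finally show ?case .
  qed simp
  show ?thesis
  proof (cases "m \<ge> 0")
    case True
    then obtain n where "m = int n" using nonneg_int_cases by blast
    then show ?thesis using pos by simp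
  next
    case False
    then obtain n where n: "m = - int n" by (intro that[of "nat (- m)"]) simp
    have "F ((i + m * k) + int n * k) = F (i + m * k)" by (rule pos)
    then show ?thesis using n by simp
  qed
qed

context setting begin

definition Cc :: "int \<Rightarrow> int \<Rightarrow> real" where
  "Cc n g = Dd PP QQ (xm g) (xm n) + Dd PP QQ (xm (g + 1)) (xm (n + k))"

definition ww :: "int \<Rightarrow> real" where
  "ww n = Min (Cc n ` {n..n + k - 1})"

lemma win_fin: "finite (Cc n ` {n..n + k - 1})" "Cc n ` {n..n + k - 1} \<noteq> {}"
  using k1 by auto

lemma ww_le: "g \<in> {n..n + k - 1} \<Longrightarrow> ww n \<le> Cc n g"
  unfolding ww_def using win_fin by (intro Min_le) auto

lemma ww_att: obtains g where "g \<in> {n..n + k - 1}" "ww n = Cc n g"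
proof -
  have "ww n \<in> Cc n ` {n..n + k - 1}" unfolding ww_def using win_fin by (rule Min_in)
  then show ?thesis using that by blast
qed

lemma Dd_xm_shift: "Dd PP QQ (xm (a + m * k)) (xm (c + m * k)) = Dd PP QQ (xm a) (xm c)"
  unfolding xm_shift by (rule Dd_shift)

lemma Dd_xm_shift1: "Dd PP QQ (xm (a + k)) (xm (c + k)) = Dd PP QQ (xm a) (xm c)"
  using Dd_xm_shift[of a 1 c] by simp

lemma Cc_shift: "Cc (n + k) (g + k) = Cc n g"
proof -
  have "Dd PP QQ (xm (g + k)) (xm (n + k)) = Dd PP QQ (xm g) (xm n)" by (rule Dd_xm_shift1)
  moreover have "Dd PP QQ (xm ((g + 1) + k)) (xm ((n + k) + k)) = Dd PP QQ (xm (g + 1)) (xm (n + k))"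
    by (rule Dd_xm_shift1)
  ultimately show ?thesis unfolding Cc_def by (simp add: algebra_simps)
qed

lemma ww_per1: "ww (n + k) = ww n"
proof -
  have "Cc (n + k) ` {n + k..n + k + k - 1} = Cc n ` {n..n + k - 1}"
  proof
    show "Cc (n + k) ` {n + k..n + k + k - 1} \<subseteq> Cc n ` {n..n + k - 1}"
    proof
      fix v assume "v \<in> Cc (n + k) ` {n + k..n + k + k - 1}"
      then obtain g where g: "g \<in> {n + k..n + k + k - 1}" "v = Cc (n + k) g" by blast
      have "v = Cc n (g - k)" using g(2) Cc_shift[of n "g - k"] by simp
      moreover have "g - k \<in> {n..n + k - 1}" using g(1) by auto
      ultimately show "v \<in> Cc n ` {n..n + k - 1}" by blast
    qed
    show "Cc n ` {n..n + k - 1} \<subseteq> Cc (n + k) ` {n + k..n + k + k - 1}"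
    proof
      fix v assume "v \<in> Cc n ` {n..n + k - 1}"
      then obtain g where g: "g \<in> {n..n + k - 1}" "v = Cc n g" by blast
      have "v = Cc (n + k) (g + k)" using g(2) Cc_shift[of n g] by simp
      moreover have "g + k \<in> {n + k..n + k + k - 1}" using g(1) by auto
      ultimately show "v \<in> Cc (n + k) ` {n + k..n + k + k - 1}" by blast
    qed
  qed
  then show ?thesis unfolding ww_def by simp
qed

lemma ww_per: "ww (n + m * k) = ww n"
  by (rule int_seq_shift_c) (rule ww_per1)

lemma ww_nonneg: "0 \<le> ww n"
proof -
  obtain g where "ww n = Cc n g" by (rule ww_att)
  then show ?thesis unfolding Cc_def using Dd_nonneg[of "xm g" "xm n"] Dd_nonneg[of "xm (g + 1)" "xm (n + k)"] by simp
qed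

lemma Cc_ge: "Dd PP QQ (xm g) (xm n) \<le> Cc n g" "Dd PP QQ (xm (g + 1)) (xm (n + k)) \<le> Cc n g"
  unfolding Cc_def using Dd_nonneg[of "xm g" "xm n"] Dd_nonneg[of "xm (g + 1)" "xm (n + k)"] by simp_all

lemma claimM_step:
  assumes IH: "\<And>n' i'. nat \<bar>i' - n'\<bar> < nat \<bar>i - n\<bar> \<Longrightarrow> ww i' \<le> ww n' + Dd PP QQ (xm n') (xm i')"
  shows "ww i \<le> ww n + Dd PP QQ (xm n) (xm i)"
proof (cases "n \<le> i")
  case ni: True
  show ?thesis
  proof (cases "n + k \<le> i")
    case True
    have "ww (i - k) \<le> ww n + Dd PP QQ (xm n) (xm (i - k))" by (rule IH) (use True k1 in auto)
    moreover have "ww (i - k) = ww i" using ww_per1[of "i - k"] by simp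
    moreover have "Dd PP QQ (xm n) (xm i) = Dd PP QQ (xm n) (xm (i - k)) + Dd PP QQ (xm (i - k)) (xm i)"
      by (rule Dd_add_right) (use True k1 in \<open>auto intro: xm_le\<close>)
    ultimately show ?thesis using Dd_nonneg[of "xm (i - k)" "xm i"] by linarith
  next
    case False
    then have ik: "i < n + k" by simp
    obtain g where g: "g \<in> {n..n + k - 1}" "ww n = Cc n g" by (rule ww_att)
    show ?thesis
    proof (cases "i \<le> g")
      case True
      have "ww i \<le> Cc i g" by (rule ww_le) (use True g ik ni in auto)
      also have "\<dots> \<le> Cc n g + Dd PP QQ (xm n) (xm i)"
      proof -
        have a1: "Dd PP QQ (xm g) (xm n) = Dd PP QQ (xm g) (xm i) + Dd PP QQ (xm i) (xm n)"
          by (rule Dd_add_left) (use True ni in \<open>auto intro: xm_le\<close>)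
        have a2: "Dd PP QQ (xm (g + 1)) (xm (i + k)) \<le> Dd PP QQ (xm (g + 1)) (xm (n + k)) + Dd PP QQ (xm (n + k)) (xm (i + k))"
          by (rule Dd_tri)
        have a3: "Dd PP QQ (xm (n + k)) (xm (i + k)) = Dd PP QQ (xm n) (xm i)" by (rule Dd_xm_shift1)
        show ?thesis unfolding Cc_def using a1 a2 a3 Dd_nonneg[of "xm i" "xm n"] by linarith
      qed
      finally show ?thesis using g(2) by simp
    next
      case False
      then have gi: "g < i" by simp
      have "ww i \<le> Cc i i" by (rule ww_le) (use k1 in auto)
      also have "\<dots> = Dd PP QQ (xm (i + 1)) (xm (i + k))" unfolding Cc_def by (simp add: Dd_self)
      also have "\<dots> = Dd PP QQ (xm (i + 1)) (xm (n + k)) + Dd PP QQ (xm (n + k)) (xm (i + k))"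
        by (rule Dd_add_right) (use ik ni in \<open>auto intro: xm_le\<close>)
      also have "\<dots> \<le> Cc n g + Dd PP QQ (xm n) (xm i)"
      proof -
        have a1: "Dd PP QQ (xm (g + 1)) (xm (n + k)) = Dd PP QQ (xm (g + 1)) (xm (i + 1)) + Dd PP QQ (xm (i + 1)) (xm (n + k))"
          by (rule Dd_add_right) (use gi ik in \<open>auto intro: xm_le\<close>)
        have a3: "Dd PP QQ (xm (n + k)) (xm (i + k)) = Dd PP QQ (xm n) (xm i)" by (rule Dd_xm_shift1)
        show ?thesis using a1 a3 Cc_ge(2)[of g n] Dd_nonneg[of "xm (g + 1)" "xm (i + 1)"] by linarith
      qed
      finally show ?thesis using g(2) by simp
    qed
  qed
next
  case False
  then have in_: "i < n" by simp
  show ?thesis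
  proof (cases "i + k \<le> n")
    case True
    have "ww (i + k) \<le> ww n + Dd PP QQ (xm n) (xm (i + k))" by (rule IH) (use True k1 in auto)
    moreover have "ww (i + k) = ww i" by (rule ww_per1)
    moreover have "Dd PP QQ (xm n) (xm i) = Dd PP QQ (xm n) (xm (i + k)) + Dd PP QQ (xm (i + k)) (xm i)"
      by (rule Dd_add_left) (use True k1 in \<open>auto intro: xm_le\<close>)
    ultimately show ?thesis using Dd_nonneg[of "xm (i + k)" "xm i"] by linarith
  next
    case False
    then have nik: "n < i + k" by simp
    obtain g where g: "g \<in> {n..n + k - 1}" "ww n = Cc n g" by (rule ww_att)
    show ?thesis
    proof (cases "g + 1 \<le> i + k")
      case True
      have "ww i \<le> Cc i g" by (rule ww_le) (use True g in_ in auto)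
      also have "\<dots> \<le> Cc n g + Dd PP QQ (xm n) (xm i)"
      proof -
        have a1: "Dd PP QQ (xm g) (xm i) \<le> Dd PP QQ (xm g) (xm n) + Dd PP QQ (xm n) (xm i)" by (rule Dd_tri)
        have a2: "Dd PP QQ (xm (g + 1)) (xm (n + k)) = Dd PP QQ (xm (g + 1)) (xm (i + k)) + Dd PP QQ (xm (i + k)) (xm (n + k))"
          by (rule Dd_add_right) (use True in_ in \<open>auto intro: xm_le\<close>)
        show ?thesis unfolding Cc_def using a1 a2 Dd_nonneg[of "xm (i + k)" "xm (n + k)"] by linarith
      qed
      finally show ?thesis using g(2) by simp
    next
      case False
      then have ig: "i + k \<le> g" by simp
      have "ww i \<le> Cc i (i + k - 1)" by (rule ww_le) (use k1 in auto)
      also have "\<dots> = Dd PP QQ (xm (i + k - 1)) (xm i)" unfolding Cc_def by (simp add: Dd_self)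
      also have "\<dots> = Dd PP QQ (xm (i + k - 1)) (xm n) + Dd PP QQ (xm n) (xm i)"
        by (rule Dd_add_left) (use nik in_ in \<open>auto intro: xm_le\<close>)
      also have "\<dots> \<le> Cc n g + Dd PP QQ (xm n) (xm i)"
      proof -
        have a1: "Dd PP QQ (xm g) (xm n) = Dd PP QQ (xm g) (xm (i + k - 1)) + Dd PP QQ (xm (i + k - 1)) (xm n)"
          by (rule Dd_add_left) (use ig nik in \<open>auto intro: xm_le\<close>)
        show ?thesis using a1 Cc_ge(1)[of g n] Dd_nonneg[of "xm g" "xm (i + k - 1)"] by linarith
      qed
      finally show ?thesis using g(2) by simp
    qed
  qed
qed

lemma claimM: "ww i \<le> ww n + Dd PP QQ (xm n) (xm i)"
proof -
  have "\<forall>n i. nat \<bar>i - n\<bar> = d \<longrightarrow> ww i \<le> ww n + Dd PP QQ (xm n) (xm i)" for d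
  proof (induction d rule: less_induct)
    case (less d)
    show ?case
    proof (intro allI impI)
      fix n i assume "nat \<bar>i - n\<bar> = d"
      then show "ww i \<le> ww n + Dd PP QQ (xm n) (xm i)"
        using claimM_step[of i n] less by blast
    qed
  qed
  then show ?thesis by blast
qed

end


lemma Inf_add_const:
  fixes a :: "int \<Rightarrow> real"
  assumes "bdd_below (range a)"
  shows "Inf (range (\<lambda>m. c + a m)) = c + Inf (range a)"
proof (rule antisym)
  show "Inf (range (\<lambda>m. c + a m)) \<le> c + Inf (range a)"
  proof -
    have "Inf (range a) \<ge> Inf (range (\<lambda>m. c + a m)) - c"
    proof (rule cInf_greatest)
      fix v assume "v \<in> range a"
      then obtain m where "v = a m" by blast
      moreover have "Inf (range (\<lambda>m. c + a m)) \<le> c + a m"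
      proof (rule cInf_lower)
        obtain M' where "\<And>m. M' \<le> a m" using assms unfolding bdd_below_def by auto
        then show "bdd_below (range (\<lambda>m. c + a m))" by (intro bdd_belowI[of _ "c + M'"]) auto
      qed simp
      ultimately show "Inf (range (\<lambda>m. c + a m)) - c \<le> v" by simp
    qed simp
    then show ?thesis by simp
  qed
  show "c + Inf (range a) \<le> Inf (range (\<lambda>m. c + a m))"
  proof (rule cInf_greatest)
    fix v assume "v \<in> range (\<lambda>m. c + a m)"
    then obtain m where "v = c + a m" by blast
    moreover have "Inf (range a) \<le> a m" by (rule cInf_lower) (use assms in auto)
    ultimately show "c + Inf (range a) \<le> v" by simp
  qed simp
qed

lemma max_le_plus: "a' \<le> a + e \<Longrightarrow> b' \<le> b + e \<Longrightarrow> max a' b' \<le> max a b + (e::real)"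
  unfolding max_def by auto

context setting begin

lemma barrier_xm: "barrier U y (xm a) = Dd PP QQ (xm a) y"
  by (rule barrier_val[OF crit_xm])

lemma term_eq:
  assumes i: "i \<in> {1..k}" and j: "j \<in> {1..k}"
  shows "hR_tilde U xm k i j + hL_tilde U xm k i j = Cc i (if j < i then j + k else j)"
proof (cases "j < i")
  case True
  have e1: "Dd PP QQ (xm (j + k)) (xm i) = Dd PP QQ (xm j) (xm (i - k))"
    using Dd_xm_shift1[of j "i - k"] by simp
  have e2: "Dd PP QQ (xm (j + k + 1)) (xm (i + k)) = Dd PP QQ (xm (j + 1)) (xm i)"
    using Dd_xm_shift1[of "j + 1" i] by (simp add: algebra_simps)
  show ?thesis using True unfolding hR_tilde_def hL_tilde_def Cc_def barrier_xm
    using e1 e2 by (simp add: algebra_simps)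
next
  case False
  then show ?thesis unfolding hR_tilde_def hL_tilde_def Cc_def barrier_xm by simp
qed

lemma Wcoef_eq:
  assumes i: "i \<in> {1..k}"
  shows "Wcoef U xm k i = ww i"
proof -
  define \<phi> where "\<phi> j = (if j < i then j + k else j)" for j
  have img: "\<phi> ` {1..k} = {i..i + k - 1}"
  proof
    show "\<phi> ` {1..k} \<subseteq> {i..i + k - 1}" unfolding \<phi>_def using i by auto
    show "{i..i + k - 1} \<subseteq> \<phi> ` {1..k}"
    proof
      fix g assume g: "g \<in> {i..i + k - 1}"
      show "g \<in> \<phi> ` {1..k}"
      proof (cases "g \<le> k")
        case True
        then have "\<phi> g = g" "g \<in> {1..k}" unfolding \<phi>_def using g i by auto
        then show ?thesis by (metis imageI)
      next
        case False
        then have "\<phi> (g - k) = g" "g - k \<in> {1..k}" unfolding \<phi>_def using g i by auto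
        then show ?thesis by (metis imageI)
      qed
    qed
  qed
  have "(\<lambda>j. hR_tilde U xm k i j + hL_tilde U xm k i j) ` {1..k} = (\<lambda>j. Cc i (\<phi> j)) ` {1..k}"
    using term_eq[OF i] unfolding \<phi>_def by (intro image_cong) auto
  also have "\<dots> = Cc i ` (\<phi> ` {1..k})" by (simp add: image_image)
  finally show ?thesis unfolding Wcoef_def ww_def img by simp
qed

lemma Dd_xm_real_shift: "Dd PP QQ (xm j) (x + of_int m) = Dd PP QQ (xm (j - m * k)) x"
proof -
  have "xm j = xm (j - m * k) + of_int m" using xm_shift[of "j - m * k" m] by simp
  then have "Dd PP QQ (xm j) (x + of_int m) = Dd PP QQ (xm (j - m * k) + of_int m) (x + of_int m)"
    by simp
  also have "\<dots> = Dd PP QQ (xm (j - m * k)) x" by (rule Dd_shift)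
  finally show ?thesis .
qed

definition Fx :: "real \<Rightarrow> int \<Rightarrow> real" where "Fx x n = ww n + Dd PP QQ (xm n) x"

lemma Fx_bdd: "bdd_below (range (Fx x))"
  unfolding Fx_def using ww_nonneg Dd_nonneg by (intro bdd_belowI[of _ 0]) (auto intro: add_nonneg_nonneg)

lemma Fx_bdd': "bdd_below (range (\<lambda>m::int. Dd PP QQ a (x + of_int m)))"
  using Dd_nonneg by (intro bdd_belowI[of _ 0]) auto

lemma W_Inf: "Wfun U xm k x = Inf (range (Fx x))"
proof -
  define G where "G j = Inf (range (\<lambda>m. Fx x (j - m * k)))" for j
  have tj: "Wcoef U xm k j + peierls U x (xm j) = G j" if j: "j \<in> {1..k}" for j
  proof -
    have "Wcoef U xm k j + peierls U x (xm j) = ww j + Inf (range (\<lambda>m::int. Dd PP QQ (xm j) (x + of_int m)))"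
      using Wcoef_eq[OF j] peierls_val[OF crit_xm] by simp
    also have "\<dots> = Inf (range (\<lambda>m. ww j + Dd PP QQ (xm j) (x + of_int m)))"
      by (rule Inf_add_const[symmetric, OF Fx_bdd'])
    also have "(\<lambda>m. ww j + Dd PP QQ (xm j) (x + of_int m)) = (\<lambda>m. Fx x (j - m * k))"
    proof
      fix m
      have "ww (j - m * k) = ww j" using ww_per[of "j - m * k" m] by simp
      then show "ww j + Dd PP QQ (xm j) (x + of_int m) = Fx x (j - m * k)"
        unfolding Fx_def Dd_xm_real_shift by simp
    qed
    finally show ?thesis unfolding G_def .
  qed
  have "(\<lambda>j. Wcoef U xm k j + peierls U x (xm j)) ` {1..k} = G ` {1..k}"
    by (rule image_cong) (use tj in auto)
  then have W: "Wfun U xm k x = Min (G ` {1..k})"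
    unfolding Wfun_def by simp
  have fin: "finite (G ` {1..k})" "G ` {1..k} \<noteq> {}" using k1 by auto
  have Gge: "Inf (range (Fx x)) \<le> G j" for j
    unfolding G_def by (rule cInf_superset_mono[OF _ Fx_bdd]) auto
  show ?thesis
  proof (rule antisym)
    show "Wfun U xm k x \<le> Inf (range (Fx x))"
    proof (unfold W, rule cInf_greatest)
      fix v assume "v \<in> range (Fx x)"
      then obtain n where v: "v = Fx x n" by blast
      obtain i m where i: "i \<in> {1..k}" and n: "n = i + m * k" by (rule decomp)
      have "Min (G ` {1..k}) \<le> G i" using fin i by (intro Min_le) auto
      also have "G i \<le> Fx x (i - (- m) * k)" unfolding G_def
      proof (rule cInf_lower)
        show "Fx x (i - - m * k) \<in> range (\<lambda>m. Fx x (i - m * k))" by blast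
        show "bdd_below (range (\<lambda>m. Fx x (i - m * k)))"
          using Fx_bdd by (rule bdd_below_mono) auto
      qed
      finally show "Min (G ` {1..k}) \<le> v" using v n by simp
    qed simp
    show "Inf (range (Fx x)) \<le> Wfun U xm k x"
    proof -
      have "Min (G ` {1..k}) \<in> G ` {1..k}" using fin by (rule Min_in)
      then show ?thesis unfolding W using Gge by auto
    qed
  qed
qed

lemma W_at_xm: "Wfun U xm k (xm j) = ww j"
proof -
  have "Inf (range (Fx (xm j))) = ww j"
  proof (rule antisym)
    have "Inf (range (Fx (xm j))) \<le> Fx (xm j) j" by (rule cInf_lower[OF _ Fx_bdd]) simp
    then show "Inf (range (Fx (xm j))) \<le> ww j" unfolding Fx_def by (simp add: Dd_self)
    show "ww j \<le> Inf (range (Fx (xm j)))"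
      by (rule cInf_greatest) (auto simp: Fx_def intro: claimM)
  qed
  then show ?thesis using W_Inf by simp
qed

lemma W_at_xm_coef: "j \<in> {1..k} \<Longrightarrow> Wfun U xm k (xm j) = Wcoef U xm k j"
  using W_at_xm Wcoef_eq by simp

lemma W_per: "Wfun U xm k (x + 1) = Wfun U xm k x"
proof -
  have e: "Fx (x + 1) n = Fx x (n - k)" for n
  proof -
    have "xm n = xm (n - k) + 1" using xm_per[rule_format, of "n - k"] by simp
    then have "Dd PP QQ (xm n) (x + 1) = Dd PP QQ (xm (n - k) + of_int 1) (x + of_int 1)" by simp
    also have "\<dots> = Dd PP QQ (xm (n - k)) x" by (rule Dd_shift)
    finally show ?thesis unfolding Fx_def using ww_per1[of "n - k"] by simp
  qed
  have "range (Fx (x + 1)) = range (Fx x)"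
  proof
    show "range (Fx (x + 1)) \<subseteq> range (Fx x)" using e by auto
    show "range (Fx x) \<subseteq> range (Fx (x + 1))"
    proof
      fix v assume "v \<in> range (Fx x)"
      then obtain n where "v = Fx x n" by blast
      then have "v = Fx (x + 1) (n + k)" using e[of "n + k"] by simp
      then show "v \<in> range (Fx (x + 1))" by blast
    qed
  qed
  then show ?thesis using W_Inf by simp
qed

lemma W_est: "Wfun U xm k y \<le> Wfun U xm k x + (\<bar>PP y - PP x\<bar> + \<bar>QQ y - QQ x\<bar>)"
proof -
  define E where "E = \<bar>PP y - PP x\<bar> + \<bar>QQ y - QQ x\<bar>"
  have t: "Fx y n \<le> Fx x n + E" for n
  proof -
    have "Dd PP QQ (xm n) y \<le> Dd PP QQ (xm n) x + E"
      unfolding Dd_def E_def by (rule max_le_plus) (simp_all add: abs_if)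
    then show ?thesis unfolding Fx_def by simp
  qed
  have "Inf (range (Fx y)) - E \<le> Inf (range (Fx x))"
  proof (rule cInf_greatest)
    fix v assume "v \<in> range (Fx x)"
    then obtain n where v: "v = Fx x n" by blast
    have "Inf (range (Fx y)) \<le> Fx y n" by (rule cInf_lower[OF _ Fx_bdd]) simp
    then show "Inf (range (Fx y)) - E \<le> v" using t[of n] v by simp
  qed simp
  then show ?thesis using W_Inf E_def by simp
qed

lemma W_est_abs: "\<bar>Wfun U xm k y - Wfun U xm k x\<bar> \<le> \<bar>PP y - PP x\<bar> + \<bar>QQ y - QQ x\<bar>"
  using W_est[of y x] W_est[of x y] by (simp add: abs_minus_commute)

lemma PP_lip: "\<bar>PP y - PP x\<bar> \<le> MM * \<bar>y - x\<bar>"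
proof -
  obtain \<xi> where "PP y - PP x = (y - x) * max 0 (deriv U \<xi>)" using mvt_any[OF PP, of x y] by blast
  moreover have "max 0 (deriv U \<xi>) \<le> MM" using MM[of \<xi>] by (simp add: abs_le_iff)
  then have "\<bar>y - x\<bar> * max 0 (deriv U \<xi>) \<le> \<bar>y - x\<bar> * MM" by (intro mult_left_mono) auto
  ultimately show ?thesis by (simp add: abs_mult mult.commute)
qed

lemma QQ_lip: "\<bar>QQ y - QQ x\<bar> \<le> MM * \<bar>y - x\<bar>"
proof -
  obtain \<xi> where "QQ y - QQ x = (y - x) * max 0 (- deriv U \<xi>)" using mvt_any[OF QQ, of x y] by blast
  moreover have "max 0 (- deriv U \<xi>) \<le> MM" using MM[of \<xi>] by (simp add: abs_le_iff)
  then have "\<bar>y - x\<bar> * max 0 (- deriv U \<xi>) \<le> \<bar>y - x\<bar> * MM" by (intro mult_left_mono) auto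
  ultimately show ?thesis by (simp add: abs_mult mult.commute)
qed

lemma W_lip: "(2 * MM)-lipschitz_on UNIV (Wfun U xm k)"
proof (rule lipschitz_onI)
  show "0 \<le> 2 * MM" using MM[of 0] by simp
  fix x y :: real
  have "\<bar>Wfun U xm k x - Wfun U xm k y\<bar> \<le> \<bar>PP x - PP y\<bar> + \<bar>QQ x - QQ y\<bar>" by (rule W_est_abs)
  also have "\<dots> \<le> MM * \<bar>x - y\<bar> + MM * \<bar>x - y\<bar>" using PP_lip[of x y] QQ_lip[of x y] by simp
  finally show "dist (Wfun U xm k x) (Wfun U xm k y) \<le> 2 * MM * dist x y" by (simp add: dist_real_def)
qed

lemma W_deriv_crit:
  assumes c: "deriv U c = 0"
  shows "(Wfun U xm k has_real_derivative 0) (at c)"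
proof -
  have P0: "(PP has_real_derivative 0) (at c)" using PP[of c] c by simp
  have Q0: "(QQ has_real_derivative 0) (at c)" using QQ[of c] c by simp
  have lP: "((\<lambda>y. (PP y - PP c) / (y - c)) \<longlongrightarrow> 0) (at c)" using P0 by (simp add: has_field_derivative_iff)
  have lQ: "((\<lambda>y. (QQ y - QQ c) / (y - c)) \<longlongrightarrow> 0) (at c)" using Q0 by (simp add: has_field_derivative_iff)
  have lim: "((\<lambda>y. \<bar>(PP y - PP c) / (y - c)\<bar> + \<bar>(QQ y - QQ c) / (y - c)\<bar>) \<longlongrightarrow> 0) (at c)"
    using tendsto_add[OF tendsto_rabs_zero[OF lP] tendsto_rabs_zero[OF lQ]] by simp
  have "((\<lambda>y. (Wfun U xm k y - Wfun U xm k c) / (y - c)) \<longlongrightarrow> 0) (at c)"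
  proof (rule Lim_null_comparison[OF _ lim])
    show "\<forall>\<^sub>F y in at c. norm ((Wfun U xm k y - Wfun U xm k c) / (y - c)) \<le> \<bar>(PP y - PP c) / (y - c)\<bar> + \<bar>(QQ y - QQ c) / (y - c)\<bar>"
    proof (rule always_eventually, rule allI)
      fix y
      have "\<bar>Wfun U xm k y - Wfun U xm k c\<bar> / \<bar>y - c\<bar> \<le> (\<bar>PP y - PP c\<bar> + \<bar>QQ y - QQ c\<bar>) / \<bar>y - c\<bar>"
        using W_est_abs[of y c] by (intro divide_right_mono) auto
      then show "norm ((Wfun U xm k y - Wfun U xm k c) / (y - c)) \<le> \<bar>(PP y - PP c) / (y - c)\<bar> + \<bar>(QQ y - QQ c) / (y - c)\<bar>"
        by (simp add: abs_divide add_divide_distrib)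
    qed
  qed
  then show ?thesis by (simp add: has_field_derivative_iff)
qed

end


lemma Inf_img_add:
  fixes a :: "int \<Rightarrow> real"
  assumes ne: "S \<noteq> {}" and bdd: "bdd_below (a ` S)"
  shows "Inf ((\<lambda>n. a n + c) ` S) = Inf (a ` S) + c"
proof (rule antisym)
  obtain M' where M': "\<And>n. n \<in> S \<Longrightarrow> M' \<le> a n" using bdd unfolding bdd_below_def by auto
  have bdd2: "bdd_below ((\<lambda>n. a n + c) ` S)" using M' by (intro bdd_belowI[of _ "M' + c"]) auto
  show "Inf ((\<lambda>n. a n + c) ` S) \<le> Inf (a ` S) + c"
  proof -
    have "Inf ((\<lambda>n. a n + c) ` S) - c \<le> Inf (a ` S)"
    proof (rule cInf_greatest)
      show "a ` S \<noteq> {}" using ne by simp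
      fix v assume "v \<in> a ` S"
      then obtain n where n: "n \<in> S" "v = a n" by blast
      have "Inf ((\<lambda>n. a n + c) ` S) \<le> a n + c" by (rule cInf_lower[OF _ bdd2]) (use n in simp)
      then show "Inf ((\<lambda>n. a n + c) ` S) - c \<le> v" using n by simp
    qed
    then show ?thesis by simp
  qed
  show "Inf (a ` S) + c \<le> Inf ((\<lambda>n. a n + c) ` S)"
  proof (rule cInf_greatest)
    show "(\<lambda>n. a n + c) ` S \<noteq> {}" using ne by simp
    fix v assume "v \<in> (\<lambda>n. a n + c) ` S"
    then obtain n where n: "n \<in> S" "v = a n + c" by blast
    have "Inf (a ` S) \<le> a n" by (rule cInf_lower[OF _ bdd]) (use n in simp)
    then show "Inf (a ` S) + c \<le> v" using n by simp
  qed
qed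

lemma Inf_range_split:
  fixes F :: "int \<Rightarrow> real"
  assumes bdd: "bdd_below (range F)"
  shows "Inf (range F) = min (Inf (F ` {..l})) (Inf (F ` {l+1..}))"
proof -
  have "(UNIV::int set) = {..l} \<union> {l+1..}" by auto
  then have u: "range F = F ` {..l} \<union> F ` {l+1..}" by (metis image_Un)
  have b1: "bdd_below (F ` {..l})" by (rule bdd_below_mono[OF bdd]) auto
  have b2: "bdd_below (F ` {l+1..})" by (rule bdd_below_mono[OF bdd]) auto
  show ?thesis unfolding u by (subst cInf_union_distrib) (use b1 b2 in \<open>auto simp: inf_min\<close>)
qed

lemma diff_local:
  fixes W h :: "real \<Rightarrow> real"
  assumes "open S" "z \<in> S" "\<And>y. y \<in> S \<Longrightarrow> h y = W y" "(h has_real_derivative d) (at z)"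
  shows "W differentiable (at z)"
proof -
  have "(W has_real_derivative d) (at z)"
    by (rule has_field_derivative_transform_within_open[OF assms(4) assms(1) assms(2)]) (use assms(3) in auto)
  then show ?thesis using real_differentiable_def by blast
qed

lemma visc_min:
  fixes W A B \<phi> :: "real \<Rightarrow> real"
  assumes S: "open S" "x \<in> S" and WS: "\<And>y. y \<in> S \<Longrightarrow> W y = min (A y) (B y)"
    and dA: "(A has_real_derivative a) (at x)" and dB: "(B has_real_derivative b) (at x)"
    and dp: "(\<phi> has_real_derivative p) (at x)"
  shows "loc_max (\<lambda>y. W y - \<phi> y) x \<Longrightarrow> min a b \<le> p \<and> p \<le> max a b"
    and "loc_min (\<lambda>y. W y - \<phi> y) x \<Longrightarrow> p = a \<or> p = b"
proof -
  obtain e0 where e0: "e0 > 0" "ball x e0 \<subseteq> S" using S openE by blast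
  have inS: "\<bar>x - y\<bar> < e0 \<Longrightarrow> y \<in> S" for y using e0 by (auto simp: dist_real_def)
  have dAp: "((\<lambda>y. A y - \<phi> y) has_real_derivative a - p) (at x)" by (rule DERIV_diff[OF dA dp])
  have dBp: "((\<lambda>y. B y - \<phi> y) has_real_derivative b - p) (at x)" by (rule DERIV_diff[OF dB dp])
  show "loc_min (\<lambda>y. W y - \<phi> y) x \<Longrightarrow> p = a \<or> p = b"
  proof -
    assume "loc_min (\<lambda>y. W y - \<phi> y) x"
    then obtain e where e: "e > 0" "\<And>y. \<bar>y - x\<bar> < e \<Longrightarrow> W x - \<phi> x \<le> W y - \<phi> y"
      unfolding loc_min_def by blast
    define d where "d = min e e0"
    have d: "d > 0" unfolding d_def using e e0 by simp
    show "p = a \<or> p = b"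
    proof (cases "A x \<le> B x")
      case True
      then have Wx: "W x = A x" using WS[OF S(2)] by simp
      have "\<forall>y. \<bar>x - y\<bar> < d \<longrightarrow> A x - \<phi> x \<le> A y - \<phi> y"
      proof (intro allI impI)
        fix y assume y: "\<bar>x - y\<bar> < d"
        then have "W x - \<phi> x \<le> W y - \<phi> y" using e(2)[of y] unfolding d_def by (simp add: abs_minus_commute)
        moreover have "W y \<le> A y" using WS[OF inS[of y]] y unfolding d_def by simp
        ultimately show "A x - \<phi> x \<le> A y - \<phi> y" using Wx by simp
      qed
      then have "a - p = 0" using DERIV_local_min[OF dAp d] by blast
      then show ?thesis by simp
    next
      case False
      then have Wx: "W x = B x" using WS[OF S(2)] by simp
      have "\<forall>y. \<bar>x - y\<bar> < d \<longrightarrow> B x - \<phi> x \<le> B y - \<phi> y"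
      proof (intro allI impI)
        fix y assume y: "\<bar>x - y\<bar> < d"
        then have "W x - \<phi> x \<le> W y - \<phi> y" using e(2)[of y] unfolding d_def by (simp add: abs_minus_commute)
        moreover have "W y \<le> B y" using WS[OF inS[of y]] y unfolding d_def by simp
        ultimately show "B x - \<phi> x \<le> B y - \<phi> y" using Wx by simp
      qed
      then have "b - p = 0" using DERIV_local_min[OF dBp d] by blast
      then show ?thesis by simp
    qed
  qed
  show "loc_max (\<lambda>y. W y - \<phi> y) x \<Longrightarrow> min a b \<le> p \<and> p \<le> max a b"
  proof -
    assume "loc_max (\<lambda>y. W y - \<phi> y) x"
    then obtain e where e: "e > 0" "\<And>y. \<bar>y - x\<bar> < e \<Longrightarrow> W y - \<phi> y \<le> W x - \<phi> x"
      unfolding loc_max_def by blast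
    define d where "d = min e e0"
    have d: "d > 0" unfolding d_def using e e0 by simp
    have cA: "isCont A x" by (rule DERIV_isCont[OF dA])
    have cB: "isCont B x" by (rule DERIV_isCont[OF dB])
    consider "A x < B x" | "B x < A x" | "A x = B x" by linarith
    then show ?thesis
    proof cases
      case 1
      have "\<forall>\<^sub>F y in at x. A y < B y"
      proof -
        have "((\<lambda>y. B y - A y) \<longlongrightarrow> B x - A x) (at x)"
          using cA cB by (intro tendsto_diff) (auto simp: isCont_def)
        then have "\<forall>\<^sub>F y in at x. B y - A y > 0" using 1 by (intro order_tendstoD(1)) auto
        then show ?thesis by (rule eventually_mono) simp
      qed
      then obtain d2 where d2: "d2 > 0" "\<And>y. y \<noteq> x \<Longrightarrow> dist y x < d2 \<Longrightarrow> A y < B y"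
        unfolding eventually_at by blast
      define d3 where "d3 = min d d2"
      have d3: "d3 > 0" unfolding d3_def using d d2 by simp
      have "\<forall>y. \<bar>x - y\<bar> < d3 \<longrightarrow> A y - \<phi> y \<le> A x - \<phi> x"
      proof (intro allI impI)
        fix y assume y: "\<bar>x - y\<bar> < d3"
        have "W y = A y"
        proof (cases "y = x")
          case True then show ?thesis using WS[OF S(2)] 1 by simp
        next
          case False
          then have "A y < B y" using d2(2)[of y] y unfolding d3_def by (simp add: dist_real_def abs_minus_commute)
          then show ?thesis using WS[OF inS[of y]] y unfolding d3_def d_def by simp
        qed
        moreover have "W y - \<phi> y \<le> W x - \<phi> x" using e(2)[of y] y unfolding d3_def d_def by (simp add: abs_minus_commute)
        moreover have "W x = A x" using WS[OF S(2)] 1 by simp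
        ultimately show "A y - \<phi> y \<le> A x - \<phi> x" by simp
      qed
      then have "a - p = 0" using DERIV_local_max[OF dAp d3] by blast
      then show ?thesis by simp
    next
      case 2
      have "\<forall>\<^sub>F y in at x. B y < A y"
      proof -
        have "((\<lambda>y. A y - B y) \<longlongrightarrow> A x - B x) (at x)"
          using cA cB by (intro tendsto_diff) (auto simp: isCont_def)
        then have "\<forall>\<^sub>F y in at x. A y - B y > 0" using 2 by (intro order_tendstoD(1)) auto
        then show ?thesis by (rule eventually_mono) simp
      qed
      then obtain d2 where d2: "d2 > 0" "\<And>y. y \<noteq> x \<Longrightarrow> dist y x < d2 \<Longrightarrow> B y < A y"
        unfolding eventually_at by blast
      define d3 where "d3 = min d d2"
      have d3: "d3 > 0" unfolding d3_def using d d2 by simp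
      have "\<forall>y. \<bar>x - y\<bar> < d3 \<longrightarrow> B y - \<phi> y \<le> B x - \<phi> x"
      proof (intro allI impI)
        fix y assume y: "\<bar>x - y\<bar> < d3"
        have "W y = B y"
        proof (cases "y = x")
          case True then show ?thesis using WS[OF S(2)] 2 by simp
        next
          case False
          then have "B y < A y" using d2(2)[of y] y unfolding d3_def by (simp add: dist_real_def abs_minus_commute)
          then show ?thesis using WS[OF inS[of y]] y unfolding d3_def d_def by simp
        qed
        moreover have "W y - \<phi> y \<le> W x - \<phi> x" using e(2)[of y] y unfolding d3_def d_def by (simp add: abs_minus_commute)
        moreover have "W x = B x" using WS[OF S(2)] 2 by simp
        ultimately show "B y - \<phi> y \<le> B x - \<phi> x" by simp
      qed
      then have "b - p = 0" using DERIV_local_max[OF dBp d3] by blast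
      then show ?thesis by simp
    next
      case 3
      have Wx: "W x = A x" "W x = B x" using WS[OF S(2)] 3 by simp_all
      show ?thesis
      proof (rule ccontr)
        assume "\<not> (min a b \<le> p \<and> p \<le> max a b)"
        then consider "p < min a b" | "max a b < p" by linarith
        then show False
        proof cases
          case 1
          then have "0 < a - p" "0 < b - p" by auto
          obtain d1 where d1: "d1 > 0" "\<And>h. h > 0 \<Longrightarrow> h < d1 \<Longrightarrow> A x - \<phi> x < A (x + h) - \<phi> (x + h)"
            using DERIV_pos_inc_right[OF dAp \<open>0 < a - p\<close>] by blast
          obtain d2 where d2: "d2 > 0" "\<And>h. h > 0 \<Longrightarrow> h < d2 \<Longrightarrow> B x - \<phi> x < B (x + h) - \<phi> (x + h)"
            using DERIV_pos_inc_right[OF dBp \<open>0 < b - p\<close>] by blast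
          define h where "h = min d (min d1 d2) / 2"
          have h: "h > 0" "h < d" "h < d1" "h < d2" unfolding h_def using d d1 d2 by auto
          have "W (x + h) = min (A (x + h)) (B (x + h))" using WS[OF inS[of "x + h"]] h unfolding d_def by simp
          then have "W x - \<phi> x < W (x + h) - \<phi> (x + h)" using d1(2)[OF h(1,3)] d2(2)[OF h(1,4)] Wx by simp
          moreover have "W (x + h) - \<phi> (x + h) \<le> W x - \<phi> x" using e(2)[of "x + h"] h unfolding d_def by simp
          ultimately show False by simp
        next
          case 2
          then have "a - p < 0" "b - p < 0" by auto
          obtain d1 where d1: "d1 > 0" "\<And>h. h > 0 \<Longrightarrow> h < d1 \<Longrightarrow> A x - \<phi> x < A (x - h) - \<phi> (x - h)"
            using DERIV_neg_dec_left[OF dAp \<open>a - p < 0\<close>] by blast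
          obtain d2 where d2: "d2 > 0" "\<And>h. h > 0 \<Longrightarrow> h < d2 \<Longrightarrow> B x - \<phi> x < B (x - h) - \<phi> (x - h)"
            using DERIV_neg_dec_left[OF dBp \<open>b - p < 0\<close>] by blast
          define h where "h = min d (min d1 d2) / 2"
          have h: "h > 0" "h < d" "h < d1" "h < d2" unfolding h_def using d d1 d2 by auto
          have "W (x - h) = min (A (x - h)) (B (x - h))" using WS[OF inS[of "x - h"]] h unfolding d_def by simp
          then have "W x - \<phi> x < W (x - h) - \<phi> (x - h)" using d1(2)[OF h(1,3)] d2(2)[OF h(1,4)] Wx by simp
          moreover have "W (x - h) - \<phi> (x - h) \<le> W x - \<phi> x" using e(2)[of "x - h"] h unfolding d_def by simp
          ultimately show False by simp
        qed
      qed
    qed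
  qed
qed


context setting begin

definition "alR l = Inf (Fx (xm l) ` {..l}) - U (xm l)"
definition "beR l = Inf (Fx (xM l) ` {l+1..})"
definition "gaL l = Inf (Fx (xM (l - 1)) ` {..l - 1})"
definition "etL l = Inf (Fx (xm l) ` {l..}) - U (xm l)"

lemma Fx_bdd_on: "bdd_below (Fx x ` S)"
  by (rule bdd_below_mono[OF Fx_bdd]) auto

lemma W_right:
  assumes z: "z \<in> {xm l..xM l}"
  shows "Wfun U xm k z = min (U z + alR l) (beR l)"
proof -
  have e1: "Fx z n = Fx (xm l) n + (U z - U (xm l))" if n: "n \<in> {..l}" for n
  proof -
    have "Dd PP QQ (xm n) z = Dd PP QQ (xm n) (xm l) + Dd PP QQ (xm l) z"
      by (rule Dd_add_right) (use n z in \<open>auto intro: xm_le\<close>)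
    moreover have "Dd PP QQ (xm l) z = U z - U (xm l)"
      using Dd_right[of "xm l" z] P_U_right[OF z] z by simp
    ultimately show ?thesis unfolding Fx_def by simp
  qed
  have e2: "Fx z n = Fx (xM l) n" if n: "n \<in> {l+1..}" for n
  proof -
    have "xM l < xm n" using n xM_lt_xm_iff[of l n] by simp
    then have "Dd PP QQ (xm n) z = Dd PP QQ (xm n) (xM l) + Dd PP QQ (xM l) z"
      by (intro Dd_add_left) (use z in auto)
    moreover have "Dd PP QQ (xM l) z = 0"
    proof -
      have "xM l \<in> {xm l..xM l}" using xm_lt_xM[of l] by simp
      then have "QQ (xM l) = QQ (xm l)" by (rule Q_const_right)
      moreover have "QQ z = QQ (xm l)" using z by (rule Q_const_right)
      ultimately show ?thesis using Dd_left[of z "xM l"] z by simp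
    qed
    ultimately show ?thesis unfolding Fx_def by simp
  qed
  have "Fx z ` {..l} = (\<lambda>n. Fx (xm l) n + (U z - U (xm l))) ` {..l}" by (rule image_cong) (use e1 in auto)
  then have i1: "Inf (Fx z ` {..l}) = Inf (Fx (xm l) ` {..l}) + (U z - U (xm l))"
    using Inf_img_add[of "{..l}" "Fx (xm l)" "U z - U (xm l)"] Fx_bdd_on by simp
  have "Fx z ` {l+1..} = Fx (xM l) ` {l+1..}" by (rule image_cong) (use e2 in auto)
  then have i2: "Inf (Fx z ` {l+1..}) = beR l" unfolding beR_def by simp
  show ?thesis using W_Inf[of z] Inf_range_split[OF Fx_bdd, of z l] i1 i2 unfolding alR_def by simp
qed

lemma W_left:
  assumes z: "z \<in> {xM (l - 1)..xm l}"
  shows "Wfun U xm k z = min (gaL l) (U z + etL l)"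
proof -
  have e1: "Fx z n = Fx (xM (l - 1)) n" if n: "n \<in> {..l - 1}" for n
  proof -
    have "xm n < xM (l - 1)" using n xm_lt_xM_iff[of n "l - 1"] by simp
    then have "Dd PP QQ (xm n) z = Dd PP QQ (xm n) (xM (l - 1)) + Dd PP QQ (xM (l - 1)) z"
      by (intro Dd_add_right) (use z in auto)
    moreover have "Dd PP QQ (xM (l - 1)) z = 0"
    proof -
      have "xM (l - 1) \<in> {xM (l - 1)..xm l}" using order_all[of l] by simp
      then have "PP (xM (l - 1)) = PP (xm l)" by (rule P_const_left)
      moreover have "PP z = PP (xm l)" using z by (rule P_const_left)
      ultimately show ?thesis using Dd_right[of "xM (l - 1)" z] z by simp
    qed
    ultimately show ?thesis unfolding Fx_def by simp
  qed
  have e2: "Fx z n = Fx (xm l) n + (U z - U (xm l))" if n: "n \<in> {l..}" for n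
  proof -
    have "Dd PP QQ (xm n) z = Dd PP QQ (xm n) (xm l) + Dd PP QQ (xm l) z"
      by (rule Dd_add_left) (use n z in \<open>auto intro: xm_le\<close>)
    moreover have "Dd PP QQ (xm l) z = U z - U (xm l)"
      using Dd_left[of z "xm l"] Q_U_left[OF z] z by simp
    ultimately show ?thesis unfolding Fx_def by simp
  qed
  have "Fx z ` {..l - 1} = Fx (xM (l - 1)) ` {..l - 1}" by (rule image_cong) (use e1 in auto)
  then have i1: "Inf (Fx z ` {..l - 1}) = gaL l" unfolding gaL_def by simp
  have "Fx z ` {l..} = (\<lambda>n. Fx (xm l) n + (U z - U (xm l))) ` {l..}" by (rule image_cong) (use e2 in auto)
  then have i2: "Inf (Fx z ` {l..}) = Inf (Fx (xm l) ` {l..}) + (U z - U (xm l))"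
    using Inf_img_add[of "{l..}" "Fx (xm l)" "U z - U (xm l)"] Fx_bdd_on by simp
  show ?thesis using W_Inf[of z] Inf_range_split[OF Fx_bdd, of z "l - 1"] i1 i2 unfolding etL_def by simp
qed

lemma cU: "continuous_on UNIV U"
  using U_deriv by (intro continuous_at_imp_continuous_on ballI DERIV_isCont) 

lemma W_diff_xm: "Wfun U xm k differentiable (at (xm l))"
  using W_deriv_crit[OF crit_xm] real_differentiable_def by blast

lemma W_diff_xM: "Wfun U xm k differentiable (at (xM l))"
  using W_deriv_crit[OF crit_xM] real_differentiable_def by blast

lemma nd_right:
  assumes z: "z \<in> {xm l..xM l}" and nd: "\<not> Wfun U xm k differentiable (at z)"
  shows "xm l < z \<and> z < xM l \<and> U z + alR l = beR l"
proof -
  have zi: "xm l < z" "z < xM l"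
    using z nd W_diff_xm[of l] W_diff_xM[of l] by (auto simp: order.order_iff_strict)
  have oI: "open {xm l<..<xM l}" by simp
  consider "U z + alR l < beR l" | "beR l < U z + alR l" | "U z + alR l = beR l" by linarith
  then show ?thesis
  proof cases
    case 1
    define S where "S = {y. U y + alR l < beR l} \<inter> {xm l<..<xM l}"
    have oS: "open S" unfolding S_def by (intro open_Int open_Collect_less oI) (auto intro!: continuous_intros cU)
    have "Wfun U xm k differentiable (at z)"
    proof (rule diff_local[OF oS])
      show "z \<in> S" unfolding S_def using 1 zi by simp
      fix y assume "y \<in> S"
      then show "U y + alR l = Wfun U xm k y" unfolding S_def using W_right[of y l] by auto
    next
      show "((\<lambda>y. U y + alR l) has_real_derivative deriv U z) (at z)"
        using U_deriv[of z] by (auto intro!: derivative_eq_intros)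
    qed
    then show ?thesis using nd by simp
  next
    case 2
    define S where "S = {y. beR l < U y + alR l} \<inter> {xm l<..<xM l}"
    have oS: "open S" unfolding S_def by (intro open_Int open_Collect_less oI) (auto intro!: continuous_intros cU)
    have "Wfun U xm k differentiable (at z)"
    proof (rule diff_local[OF oS])
      show "z \<in> S" unfolding S_def using 2 zi by simp
      fix y assume "y \<in> S"
      then show "beR l = Wfun U xm k y" unfolding S_def using W_right[of y l] by auto
    next
      show "((\<lambda>y. beR l) has_real_derivative 0) (at z)" by simp
    qed
    then show ?thesis using nd by simp
  next
    case 3
    then show ?thesis using zi by simp
  qed
qed

lemma nd_left:
  assumes z: "z \<in> {xM (l - 1)..xm l}" and nd: "\<not> Wfun U xm k differentiable (at z)"
  shows "xM (l - 1) < z \<and> z < xm l \<and> U z + etL l = gaL l"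
proof -
  have zi: "xM (l - 1) < z" "z < xm l"
    using z nd W_diff_xm[of l] W_diff_xM[of "l - 1"] by (auto simp: order.order_iff_strict)
  have oI: "open {xM (l - 1)<..<xm l}" by simp
  consider "U z + etL l < gaL l" | "gaL l < U z + etL l" | "U z + etL l = gaL l" by linarith
  then show ?thesis
  proof cases
    case 1
    define S where "S = {y. U y + etL l < gaL l} \<inter> {xM (l - 1)<..<xm l}"
    have oS: "open S" unfolding S_def by (intro open_Int open_Collect_less oI) (auto intro!: continuous_intros cU)
    have "Wfun U xm k differentiable (at z)"
    proof (rule diff_local[OF oS])
      show "z \<in> S" unfolding S_def using 1 zi by simp
      fix y assume "y \<in> S"
      then show "U y + etL l = Wfun U xm k y" unfolding S_def using W_left[of y l] by auto
    next
      show "((\<lambda>y. U y + etL l) has_real_derivative deriv U z) (at z)"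
        using U_deriv[of z] by (auto intro!: derivative_eq_intros)
    qed
    then show ?thesis using nd by simp
  next
    case 2
    define S where "S = {y. gaL l < U y + etL l} \<inter> {xM (l - 1)<..<xm l}"
    have oS: "open S" unfolding S_def by (intro open_Int open_Collect_less oI) (auto intro!: continuous_intros cU)
    have "Wfun U xm k differentiable (at z)"
    proof (rule diff_local[OF oS])
      show "z \<in> S" unfolding S_def using 2 zi by simp
      fix y assume "y \<in> S"
      then show "gaL l = Wfun U xm k y" unfolding S_def using W_left[of y l] by auto
    next
      show "((\<lambda>y. gaL l) has_real_derivative 0) (at z)" by simp
    qed
    then show ?thesis using nd by simp
  next
    case 3
    then show ?thesis using zi by simp
  qed
qed

lemma uniq_right:
  assumes "z \<in> {xm l..xM l}" "z' \<in> {xm l..xM l}"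
    "\<not> Wfun U xm k differentiable (at z)" "\<not> Wfun U xm k differentiable (at z')"
  shows "z = z'"
proof -
  have "U z = U z'" using nd_right[OF assms(1,3)] nd_right[OF assms(2,4)] by simp
  then show ?thesis using U_strict_right[OF assms(1,2)] U_strict_right[OF assms(2,1)]
    by (cases z z' rule: linorder_cases) auto
qed

lemma uniq_left:
  assumes "z \<in> {xM (l - 1)..xm l}" "z' \<in> {xM (l - 1)..xm l}"
    "\<not> Wfun U xm k differentiable (at z)" "\<not> Wfun U xm k differentiable (at z')"
  shows "z = z'"
proof -
  have "U z = U z'" using nd_left[OF assms(1,3)] nd_left[OF assms(2,4)] by simp
  then show ?thesis using U_strict_left[OF assms(1,2)] U_strict_left[OF assms(2,1)]
    by (cases z z' rule: linorder_cases) auto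
qed

lemma shape_right:
  assumes z: "z \<in> {xm l..xM l}" and nd: "\<not> Wfun U xm k differentiable (at z)"
  shows "\<exists>\<delta>>0. strict_mono_on {z - \<delta>..z} (Wfun U xm k) \<and> (\<forall>y\<in>{z..z + \<delta>}. Wfun U xm k y = Wfun U xm k z)"
proof -
  note h = nd_right[OF z nd]
  define \<delta> where "\<delta> = min (z - xm l) (xM l - z)"
  have d: "\<delta> > 0" unfolding \<delta>_def using h by simp
  have lo: "Wfun U xm k y = U y + alR l" if y: "y \<in> {z - \<delta>..z}" for y
  proof -
    have yI: "y \<in> {xm l..xM l}" using y h unfolding \<delta>_def by auto
    have "U y \<le> U z" using U_strict_right[OF yI z] y by (cases "y = z") auto
    then show ?thesis using W_right[OF yI] h by simp
  qed
  have hi: "Wfun U xm k y = Wfun U xm k z" if y: "y \<in> {z..z + \<delta>}" for y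
  proof -
    have yI: "y \<in> {xm l..xM l}" using y h unfolding \<delta>_def by auto
    have "U z \<le> U y" using U_strict_right[OF z yI] y by (cases "y = z") auto
    then show ?thesis using W_right[OF yI] W_right[OF z] h by simp
  qed
  have "strict_mono_on {z - \<delta>..z} (Wfun U xm k)"
  proof (rule monotone_onI)
    fix r s assume r: "r \<in> {z - \<delta>..z}" and s: "s \<in> {z - \<delta>..z}" and rs: "r < s"
    have "r \<in> {xm l..xM l}" "s \<in> {xm l..xM l}" using r s h unfolding \<delta>_def by auto
    then have "U r < U s" using U_strict_right rs by blast
    then show "Wfun U xm k r < Wfun U xm k s" using lo[OF r] lo[OF s] by simp
  qed
  then show ?thesis using d hi by blast
qed

lemma shape_left:
  assumes z: "z \<in> {xM (l - 1)..xm l}" and nd: "\<not> Wfun U xm k differentiable (at z)"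
  shows "\<exists>\<delta>>0. (\<forall>y\<in>{z - \<delta>..z}. Wfun U xm k y = Wfun U xm k z) \<and> strict_antimono_on {z..z + \<delta>} (Wfun U xm k)"
proof -
  note h = nd_left[OF z nd]
  define \<delta> where "\<delta> = min (z - xM (l - 1)) (xm l - z)"
  have d: "\<delta> > 0" unfolding \<delta>_def using h by simp
  have lo: "Wfun U xm k y = Wfun U xm k z" if y: "y \<in> {z - \<delta>..z}" for y
  proof -
    have yI: "y \<in> {xM (l - 1)..xm l}" using y h unfolding \<delta>_def by auto
    have "U z \<le> U y" using U_strict_left[OF yI z] y by (cases "y = z") auto
    then show ?thesis using W_left[OF yI] W_left[OF z] h by simp
  qed
  have hi: "Wfun U xm k y = U y + etL l" if y: "y \<in> {z..z + \<delta>}" for y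
  proof -
    have yI: "y \<in> {xM (l - 1)..xm l}" using y h unfolding \<delta>_def by auto
    have "U y \<le> U z" using U_strict_left[OF z yI] y by (cases "y = z") auto
    then show ?thesis using W_left[OF yI] h by simp
  qed
  have "strict_antimono_on {z..z + \<delta>} (Wfun U xm k)"
  proof (rule monotone_onI)
    fix r s assume r: "r \<in> {z..z + \<delta>}" and s: "s \<in> {z..z + \<delta>}" and rs: "r < s"
    have "r \<in> {xM (l - 1)..xm l}" "s \<in> {xM (l - 1)..xm l}" using r s h unfolding \<delta>_def by auto
    then have "U s < U r" using U_strict_left rs by blast
    then show "Wfun U xm k s < Wfun U xm k r" using hi[OF r] hi[OF s] by simp
  qed
  then show ?thesis using d lo by blast
qed

end


lemma H_between: "min f 0 \<le> p \<and> p \<le> max f 0 \<Longrightarrow> p * (p - f) \<le> (0::real)"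
proof -
  assume h: "min f 0 \<le> p \<and> p \<le> max f 0"
  show ?thesis
  proof (cases "f \<ge> 0")
    case True
    then have "0 \<le> p" "p - f \<le> 0" using h by auto
    then show ?thesis by (rule mult_nonneg_nonpos)
  next
    case False
    then have "p \<le> 0" "0 \<le> p - f" using h by auto
    then show ?thesis by (rule mult_nonpos_nonneg)
  qed
qed

context setting begin

lemma cover: "\<exists>l. xM (l - 1) \<le> x \<and> x < xM l"
proof -
  define t where "t = x - of_int \<lfloor>x\<rfloor>"
  have t: "0 \<le> t" "t < 1" unfolding t_def by linarith+
  define A where "A = {j \<in> {0..k}. xM j \<le> t}"
  have fA: "finite A" unfolding A_def by (rule finite_subset[of _ "{0..k}"]) auto
  have A0: "0 \<in> A" unfolding A_def using k1 xM0 t by simp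
  define i0 where "i0 = Max A"
  have i0A: "i0 \<in> A" unfolding i0_def using fA A0 by (intro Max_in) auto
  have i0k: "i0 < k"
  proof (rule ccontr)
    assume "\<not> i0 < k"
    then have "i0 = k" using i0A unfolding A_def by auto
    then show False using i0A xMk t unfolding A_def by simp
  qed
  have lo: "xM i0 \<le> t" using i0A unfolding A_def by simp
  have hi: "t < xM (i0 + 1)"
  proof (rule ccontr)
    assume "\<not> t < xM (i0 + 1)"
    then have "i0 + 1 \<in> A" unfolding A_def using i0A i0k by (auto simp: A_def)
    then have "i0 + 1 \<le> i0" unfolding i0_def using fA by (intro Max_ge)
    then show False by simp
  qed
  define l where "l = i0 + 1 + \<lfloor>x\<rfloor> * k"
  have "xM (l - 1) = xM i0 + of_int \<lfloor>x\<rfloor>" unfolding l_def using xM_shift[of i0 "\<lfloor>x\<rfloor>"] by simp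
  moreover have "xM l = xM (i0 + 1) + of_int \<lfloor>x\<rfloor>" unfolding l_def by (rule xM_shift)
  ultimately have "xM (l - 1) \<le> x \<and> x < xM l" using lo hi unfolding t_def by simp
  then show ?thesis by blast
qed

lemma visc_point:
  assumes C1: "C1_fun \<phi>"
  shows "loc_max (\<lambda>y. Wfun U xm k y - \<phi> y) x \<Longrightarrow> deriv \<phi> x * (deriv \<phi> x - deriv U x) \<le> 0"
    and "loc_min (\<lambda>y. Wfun U xm k y - \<phi> y) x \<Longrightarrow> deriv \<phi> x * (deriv \<phi> x - deriv U x) \<ge> 0"
proof -
  have dp: "(\<phi> has_real_derivative deriv \<phi> x) (at x)"
    using C1 unfolding C1_fun_def by (simp add: DERIV_deriv_iff_real_differentiable)
  define p where "p = deriv \<phi> x"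
  obtain l where l: "xM (l - 1) \<le> x" "x < xM l" using cover by blast
  have crit_case: "p = 0" if c: "deriv U x = 0" and ext: "loc_max (\<lambda>y. Wfun U xm k y - \<phi> y) x \<or> loc_min (\<lambda>y. Wfun U xm k y - \<phi> y) x"
  proof -
    have d: "((\<lambda>y. Wfun U xm k y - \<phi> y) has_real_derivative 0 - p) (at x)"
      unfolding p_def by (rule DERIV_diff[OF W_deriv_crit[OF c] dp])
    from ext show ?thesis
    proof
      assume "loc_max (\<lambda>y. Wfun U xm k y - \<phi> y) x"
      then obtain e where "e > 0" "\<forall>y. \<bar>x - y\<bar> < e \<longrightarrow> Wfun U xm k y - \<phi> y \<le> Wfun U xm k x - \<phi> x"
        unfolding loc_max_def by (auto simp: abs_minus_commute)
      from DERIV_local_max[OF d this] show ?thesis by simp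
    next
      assume "loc_min (\<lambda>y. Wfun U xm k y - \<phi> y) x"
      then obtain e where "e > 0" "\<forall>y. \<bar>x - y\<bar> < e \<longrightarrow> Wfun U xm k x - \<phi> x \<le> Wfun U xm k y - \<phi> y"
        unfolding loc_min_def by (auto simp: abs_minus_commute)
      from DERIV_local_min[OF d this] show ?thesis by simp
    qed
  qed
  consider "x = xM (l - 1)" | "xM (l - 1) < x \<and> x < xm l" | "x = xm l" | "xm l < x \<and> x < xM l"
    using l by linarith
  note cs = this
  show "loc_max (\<lambda>y. Wfun U xm k y - \<phi> y) x \<Longrightarrow> deriv \<phi> x * (deriv \<phi> x - deriv U x) \<le> 0"
  proof -
    assume lm: "loc_max (\<lambda>y. Wfun U xm k y - \<phi> y) x"
    from cs show ?thesis
    proof cases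
      case 1 then have "p = 0" using crit_case crit_xM lm by blast
      then show ?thesis unfolding p_def by simp
    next
      case 3 then have "p = 0" using crit_case crit_xm lm by blast
      then show ?thesis unfolding p_def by simp
    next
      case 2
      have "min 0 (deriv U x) \<le> p \<and> p \<le> max 0 (deriv U x)"
      proof (rule visc_min(1)[where S="{xM (l - 1)<..<xm l}" and A="\<lambda>y. gaL l" and B="\<lambda>y. U y + etL l"])
        show "open {xM (l - 1)<..<xm l}" by simp
        show "x \<in> {xM (l - 1)<..<xm l}" using 2 by simp
        show "\<And>y. y \<in> {xM (l - 1)<..<xm l} \<Longrightarrow> Wfun U xm k y = min (gaL l) (U y + etL l)"
          using W_left by auto
        show "((\<lambda>y. gaL l) has_real_derivative 0) (at x)" by simp
        show "((\<lambda>y. U y + etL l) has_real_derivative deriv U x) (at x)"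
          using U_deriv[of x] by (auto intro!: derivative_eq_intros)
        show "(\<phi> has_real_derivative p) (at x)" using dp unfolding p_def .
        show "loc_max (\<lambda>y. Wfun U xm k y - \<phi> y) x" by (rule lm)
      qed
      then show ?thesis using H_between[of "deriv U x" p] unfolding p_def by (simp add: min.commute max.commute)
    next
      case 4
      have "min (deriv U x) 0 \<le> p \<and> p \<le> max (deriv U x) 0"
      proof (rule visc_min(1)[where S="{xm l<..<xM l}" and A="\<lambda>y. U y + alR l" and B="\<lambda>y. beR l"])
        show "open {xm l<..<xM l}" by simp
        show "x \<in> {xm l<..<xM l}" using 4 by simp
        show "\<And>y. y \<in> {xm l<..<xM l} \<Longrightarrow> Wfun U xm k y = min (U y + alR l) (beR l)"
          using W_right by auto
        show "((\<lambda>y. beR l) has_real_derivative 0) (at x)" by simp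
        show "((\<lambda>y. U y + alR l) has_real_derivative deriv U x) (at x)"
          using U_deriv[of x] by (auto intro!: derivative_eq_intros)
        show "(\<phi> has_real_derivative p) (at x)" using dp unfolding p_def .
        show "loc_max (\<lambda>y. Wfun U xm k y - \<phi> y) x" by (rule lm)
      qed
      then show ?thesis using H_between[of "deriv U x" p] unfolding p_def by simp
    qed
  qed
  show "loc_min (\<lambda>y. Wfun U xm k y - \<phi> y) x \<Longrightarrow> deriv \<phi> x * (deriv \<phi> x - deriv U x) \<ge> 0"
  proof -
    assume lm: "loc_min (\<lambda>y. Wfun U xm k y - \<phi> y) x"
    from cs show ?thesis
    proof cases
      case 1 then have "p = 0" using crit_case crit_xM lm by blast
      then show ?thesis unfolding p_def by simp
    next
      case 3 then have "p = 0" using crit_case crit_xm lm by blast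
      then show ?thesis unfolding p_def by simp
    next
      case 2
      have "p = 0 \<or> p = deriv U x"
      proof (rule visc_min(2)[where S="{xM (l - 1)<..<xm l}" and A="\<lambda>y. gaL l" and B="\<lambda>y. U y + etL l"])
        show "open {xM (l - 1)<..<xm l}" by simp
        show "x \<in> {xM (l - 1)<..<xm l}" using 2 by simp
        show "\<And>y. y \<in> {xM (l - 1)<..<xm l} \<Longrightarrow> Wfun U xm k y = min (gaL l) (U y + etL l)"
          using W_left by auto
        show "((\<lambda>y. gaL l) has_real_derivative 0) (at x)" by simp
        show "((\<lambda>y. U y + etL l) has_real_derivative deriv U x) (at x)"
          using U_deriv[of x] by (auto intro!: derivative_eq_intros)
        show "(\<phi> has_real_derivative p) (at x)" using dp unfolding p_def .
        show "loc_min (\<lambda>y. Wfun U xm k y - \<phi> y) x" by (rule lm)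
      qed
      then show ?thesis unfolding p_def by auto
    next
      case 4
      have "p = deriv U x \<or> p = 0"
      proof (rule visc_min(2)[where S="{xm l<..<xM l}" and A="\<lambda>y. U y + alR l" and B="\<lambda>y. beR l"])
        show "open {xm l<..<xM l}" by simp
        show "x \<in> {xm l<..<xM l}" using 4 by simp
        show "\<And>y. y \<in> {xm l<..<xM l} \<Longrightarrow> Wfun U xm k y = min (U y + alR l) (beR l)"
          using W_right by auto
        show "((\<lambda>y. beR l) has_real_derivative 0) (at x)" by simp
        show "((\<lambda>y. U y + alR l) has_real_derivative deriv U x) (at x)"
          using U_deriv[of x] by (auto intro!: derivative_eq_intros)
        show "(\<phi> has_real_derivative p) (at x)" using dp unfolding p_def .
        show "loc_min (\<lambda>y. Wfun U xm k y - \<phi> y) x" by (rule lm)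
      qed
      then show ?thesis unfolding p_def by auto
    qed
  qed
qed

lemma visc: "viscosity_solution (\<lambda>p x. p * (p - deriv U x)) (Wfun U xm k)"
  unfolding viscosity_solution_def
proof (intro conjI allI impI)
  show "continuous_on UNIV (Wfun U xm k)" by (rule lipschitz_on_continuous_on[OF W_lip])
  fix \<phi> x
  assume h: "C1_fun \<phi> \<and> loc_max (\<lambda>y. Wfun U xm k y - \<phi> y) x"
  then show "deriv \<phi> x * (deriv \<phi> x - deriv U x) \<le> 0" using visc_point(1) by blast
next
  fix \<phi> x
  assume h: "C1_fun \<phi> \<and> loc_min (\<lambda>y. Wfun U xm k y - \<phi> y) x"
  then show "deriv \<phi> x * (deriv \<phi> x - deriv U x) \<ge> 0" using visc_point(2) by blast
qed

lemma main:
  shows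
    "(\<exists>C. C-lipschitz_on UNIV (Wfun U xm k)) \<and> (\<forall>x. Wfun U xm k (x + 1) = Wfun U xm k x)
   \<and> (\<forall>i\<in>{1..k}.
        (\<forall>z\<in>{xm i..xM i}. \<forall>z'\<in>{xm i..xM i}.
            \<not> Wfun U xm k differentiable (at z) \<and> \<not> Wfun U xm k differentiable (at z') \<longrightarrow> z = z')
      \<and> (\<forall>z\<in>{xm i..xM i}. \<not> Wfun U xm k differentiable (at z) \<longrightarrow>
            (\<exists>\<delta>>0. strict_mono_on {z - \<delta>..z} (Wfun U xm k) \<and>
                    (\<forall>y\<in>{z..z + \<delta>}. Wfun U xm k y = Wfun U xm k z)))
      \<and> (\<forall>z\<in>{xM (i - 1)..xm i}. \<forall>z'\<in>{xM (i - 1)..xm i}.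
            \<not> Wfun U xm k differentiable (at z) \<and> \<not> Wfun U xm k differentiable (at z') \<longrightarrow> z = z')
      \<and> (\<forall>z\<in>{xM (i - 1)..xm i}. \<not> Wfun U xm k differentiable (at z) \<longrightarrow>
            (\<exists>\<delta>>0. (\<forall>y\<in>{z - \<delta>..z}. Wfun U xm k y = Wfun U xm k z) \<and>
                    strict_antimono_on {z..z + \<delta>} (Wfun U xm k)))
      \<and> Wfun U xm k differentiable (at (xm i))
      \<and> Wfun U xm k differentiable (at (xM i)))
   \<and> viscosity_solution (\<lambda>p x. p * (p - deriv U x)) (Wfun U xm k)
   \<and> (\<forall>j\<in>{1..k}. Wfun U xm k (xm j) = Wcoef U xm k j)"
proof (intro conjI ballI allI impI)
  show "\<exists>C. C-lipschitz_on UNIV (Wfun U xm k)" using W_lip by blast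
  show "\<And>x. Wfun U xm k (x + 1) = Wfun U xm k x" by (rule W_per)
  show "viscosity_solution (\<lambda>p x. p * (p - deriv U x)) (Wfun U xm k)" by (rule visc)
  show "\<And>j. j \<in> {1..k} \<Longrightarrow> Wfun U xm k (xm j) = Wcoef U xm k j" by (rule W_at_xm_coef)
  fix i assume i: "i \<in> {1..k}"
  show "\<And>z z'. z \<in> {xm i..xM i} \<Longrightarrow> z' \<in> {xm i..xM i} \<Longrightarrow>
            \<not> Wfun U xm k differentiable (at z) \<and> \<not> Wfun U xm k differentiable (at z') \<Longrightarrow> z = z'"
    using uniq_right by blast
  show "\<And>z. z \<in> {xm i..xM i} \<Longrightarrow> \<not> Wfun U xm k differentiable (at z) \<Longrightarrow>
            (\<exists>\<delta>>0. strict_mono_on {z - \<delta>..z} (Wfun U xm k) \<and>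
                    (\<forall>y\<in>{z..z + \<delta>}. Wfun U xm k y = Wfun U xm k z))"
    by (rule shape_right)
  show "\<And>z z'. z \<in> {xM (i - 1)..xm i} \<Longrightarrow> z' \<in> {xM (i - 1)..xm i} \<Longrightarrow>
            \<not> Wfun U xm k differentiable (at z) \<and> \<not> Wfun U xm k differentiable (at z') \<Longrightarrow> z = z'"
    using uniq_left by blast
  show "\<And>z. z \<in> {xM (i - 1)..xm i} \<Longrightarrow> \<not> Wfun U xm k differentiable (at z) \<Longrightarrow>
            (\<exists>\<delta>>0. (\<forall>y\<in>{z - \<delta>..z}. Wfun U xm k y = Wfun U xm k z) \<and>
                    strict_antimono_on {z..z + \<delta>} (Wfun U xm k))"
    by (rule shape_left)
  show "Wfun U xm k differentiable (at (xm i))" by (rule W_diff_xm)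
  show "Wfun U xm k differentiable (at (xM i))" by (rule W_diff_xM)
qed

end

theorem proposition3p6:
  fixes U Ut :: "real \<Rightarrow> real" and b :: real and k :: int
    and xm xM :: "int \<Rightarrow> real"
  assumes smoothU: "smooth_fun U" and smoothUt: "smooth_fun Ut"
    and skew: "\<forall>x. U x = Ut x - b * x" and per: "\<forall>x. Ut (x + 1) = Ut x"
    and k1: "k \<ge> 1"
    and xm_per: "\<forall>i. xm (i + k) = xm i + 1"
    and xM_per: "\<forall>i. xM (i + k) = xM i + 1"
    and xM0: "xM 0 = 0" and xMk: "xM k = 1"
    and order: "\<forall>i\<in>{1..k}. xM (i - 1) < xm i \<and> xm i < xM i"
    and mins: "\<forall>i\<in>{1..k}. loc_min U (xm i)"
    and maxs: "\<forall>i\<in>{1..k}. loc_max U (xM i)"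
    and crit: "{x\<in>{0..<1}. deriv U x = 0} = xm ` {1..k} \<union> xM ` {0..<k}"
  shows
    "(\<exists>C. C-lipschitz_on UNIV (Wfun U xm k)) \<and> (\<forall>x. Wfun U xm k (x + 1) = Wfun U xm k x)
   \<and> (\<forall>i\<in>{1..k}.
        (\<forall>z\<in>{xm i..xM i}. \<forall>z'\<in>{xm i..xM i}.
            \<not> Wfun U xm k differentiable (at z) \<and> \<not> Wfun U xm k differentiable (at z') \<longrightarrow> z = z')
      \<and> (\<forall>z\<in>{xm i..xM i}. \<not> Wfun U xm k differentiable (at z) \<longrightarrow>
            (\<exists>\<delta>>0. strict_mono_on {z - \<delta>..z} (Wfun U xm k) \<and>
                    (\<forall>y\<in>{z..z + \<delta>}. Wfun U xm k y = Wfun U xm k z)))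
      \<and> (\<forall>z\<in>{xM (i - 1)..xm i}. \<forall>z'\<in>{xM (i - 1)..xm i}.
            \<not> Wfun U xm k differentiable (at z) \<and> \<not> Wfun U xm k differentiable (at z') \<longrightarrow> z = z')
      \<and> (\<forall>z\<in>{xM (i - 1)..xm i}. \<not> Wfun U xm k differentiable (at z) \<longrightarrow>
            (\<exists>\<delta>>0. (\<forall>y\<in>{z - \<delta>..z}. Wfun U xm k y = Wfun U xm k z) \<and>
                    strict_antimono_on {z..z + \<delta>} (Wfun U xm k)))
      \<and> Wfun U xm k differentiable (at (xm i))
      \<and> Wfun U xm k differentiable (at (xM i)))
   \<and> viscosity_solution (\<lambda>p x. p * (p - deriv U x)) (Wfun U xm k)
   \<and> (\<forall>j\<in>{1..k}. Wfun U xm k (xm j) = Wcoef U xm k j)"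
proof -
  interpret setting U Ut b k xm xM
    using smoothU skew per k1 xm_per xM_per xM0 xMk order mins crit by unfold_locales
  show ?thesis by (rule main)
qed


end
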